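(* Let $\mathcal S$ be the stabilizer group of an $n$-qubit stabilizer code ($-I\notin\mathcal S$), generated by independent commuting Pauli operators $S_1,\dots,S_r$, and for $x\in\mathbb F_2^r$ let $\Pi_x=\prod_{i=1}^r\frac12(I+(-1)^{x_i}S_i)$. Let $\mathcal M(\sigma)=\sum_{x\in\mathbb F_2^r}|x\rangle\langle x|\otimes\Pi_x\sigma\Pi_x$. Let $B\subseteq[n]$ be recoverable, i.e. every Pauli operator supported on $B$ that commutes with all $S_i$ equals $\lambda S$ for some $S\in\mathcal S$ and $\lambda\in\{\pm1,\pm i\}$. Let $\mathcal E_B$ be a linear superoperator on $n$ qubits acting as the identity on the qubits outside $B$, and let $\rho$ be a density operator with $\Pi_0\rho\Pi_0=\rho$. Then there exist complex numbers $\alpha_x$ and Pauli operators $E_x$ supported on $B$ ($x\in\mathbb F_2^r$) such that $$\mathcal M(\mathcal E_B(\rho))=\sum_{x\in\mathbb F_2^r}\alpha_x\,|x\rangle\langle x|\otimes E_x\rho E_x.$$ If $\mathcal E_B$ is trace preserving, then $\sum_x\alpha_x=1$.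
   Context: Pauli operators are tensor products of $I,X,Y,Z$ with phases; a superoperator acts as the identity outside $B$ if it has the form $\mathcal I_{[n]\setminus B}\otimes\mathcal E$. *)

theory Defs
  imports Complex_Main "Jordan_Normal_Form.Matrix"
begin

text \<open>Computational basis of n qubits: index i < 2^n, qubit k (k < n) carries bit k of i.\<close>
definition qbit :: "nat \<Rightarrow> nat \<Rightarrow> nat" where
  "qbit i k = (i div 2 ^ k) mod 2"

text \<open>Single-qubit Paulis: 0 = I, 1 = X, 2 = Y, 3 = Z.\<close>
definition pauli1 :: "nat \<Rightarrow> complex mat" where
  "pauli1 a = (if a = 1 then mat_of_rows_list 2 [[0, 1], [1, 0]]
    else if a = 2 then mat_of_rows_list 2 [[0, -\<i>], [\<i>, 0]]
    else if a = 3 then mat_of_rows_list 2 [[1, 0], [0, -1]]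
    else mat_of_rows_list 2 [[1, 0], [0, 1]])"

definition pauli_string :: "nat \<Rightarrow> (nat \<Rightarrow> nat) \<Rightarrow> complex mat" where
  "pauli_string n p = mat (2 ^ n) (2 ^ n)
     (\<lambda>(i, j). \<Prod>k<n. pauli1 (p k) $$ (qbit i k, qbit j k))"

definition pauli_on :: "nat \<Rightarrow> nat set \<Rightarrow> complex mat \<Rightarrow> bool" where
  "pauli_on n B P \<longleftrightarrow> (\<exists>c p. c \<in> {1, -1, \<i>, -\<i>} \<and> (\<forall>k<n. p k < 4) \<and>
      (\<forall>k<n. k \<notin> B \<longrightarrow> p k = 0) \<and> P = c \<cdot>\<^sub>m pauli_string n p)"

definition is_pauli :: "nat \<Rightarrow> complex mat \<Rightarrow> bool" where
  "is_pauli n P \<longleftrightarrow> pauli_on n {0..<n} P"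

text \<open>The group generated by a set G of invertible N x N matrices of finite order
  (as for Pauli operators) is the monoid generated by G.\<close>
inductive_set gen_group :: "nat \<Rightarrow> complex mat set \<Rightarrow> complex mat set"
  for N :: nat and G :: "complex mat set" where
  one: "1\<^sub>m N \<in> gen_group N G"
| mult: "g \<in> G \<Longrightarrow> A \<in> gen_group N G \<Longrightarrow> g * A \<in> gen_group N G"

definition stab_group :: "nat \<Rightarrow> nat \<Rightarrow> (nat \<Rightarrow> complex mat) \<Rightarrow> complex mat set" where
  "stab_group n r S = gen_group (2 ^ n) (S ` {0..<r})"

definition stabilizer_generators :: "nat \<Rightarrow> nat \<Rightarrow> (nat \<Rightarrow> complex mat) \<Rightarrow> bool" where
  "stabilizer_generators n r S \<longleftrightarrow>
     (\<forall>i<r. is_pauli n (S i)) \<and>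
     (\<forall>i<r. \<forall>j<r. S i * S j = S j * S i) \<and>
     (\<forall>i<r. S i \<notin> gen_group (2 ^ n) (S ` ({0..<r} - {i}))) \<and>
     - 1\<^sub>m (2 ^ n) \<notin> stab_group n r S"

text \<open>Syndrome x in F_2^r encoded as x < 2^r, x_i = qbit x i.
  proj n S x k = prod_{i<k} (I + (-1)^{x_i} S_i)/2.\<close>
fun proj_upto :: "nat \<Rightarrow> (nat \<Rightarrow> complex mat) \<Rightarrow> nat \<Rightarrow> nat \<Rightarrow> complex mat" where
  "proj_upto n S x 0 = 1\<^sub>m (2 ^ n)"
| "proj_upto n S x (Suc k) = proj_upto n S x k *
     ((1/2) \<cdot>\<^sub>m (1\<^sub>m (2 ^ n) + ((-1) ^ qbit x k) \<cdot>\<^sub>m S k))"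

definition proj :: "nat \<Rightarrow> nat \<Rightarrow> (nat \<Rightarrow> complex mat) \<Rightarrow> nat \<Rightarrow> complex mat" where
  "proj n r S x = proj_upto n S x r"

text \<open>sum_{x<2^r} |x><x| (x) A_x  (classical register as the first tensor factor).\<close>
definition blockdiag :: "nat \<Rightarrow> nat \<Rightarrow> (nat \<Rightarrow> complex mat) \<Rightarrow> complex mat" where
  "blockdiag r N A = mat (2 ^ r * N) (2 ^ r * N)
     (\<lambda>(i, j). if i div N = j div N then A (i div N) $$ (i mod N, j mod N) else 0)"

definition syndrome_meas :: "nat \<Rightarrow> nat \<Rightarrow> (nat \<Rightarrow> complex mat) \<Rightarrow> complex mat \<Rightarrow> complex mat" where
  "syndrome_meas n r S \<sigma> = blockdiag r (2 ^ n) (\<lambda>x. proj n r S x * \<sigma> * proj n r S x)"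

definition recoverable :: "nat \<Rightarrow> nat \<Rightarrow> (nat \<Rightarrow> complex mat) \<Rightarrow> nat set \<Rightarrow> bool" where
  "recoverable n r S B \<longleftrightarrow> B \<subseteq> {0..<n} \<and>
     (\<forall>P. pauli_on n B P \<and> (\<forall>i<r. P * S i = S i * P) \<longrightarrow>
        (\<exists>T \<in> stab_group n r S. \<exists>c \<in> {1, -1, \<i>, -\<i>}. P = c \<cdot>\<^sub>m T))"

definition restrict_idx :: "nat set \<Rightarrow> nat \<Rightarrow> nat \<Rightarrow> nat" where
  "restrict_idx B n i = (\<Sum>k\<in>B \<inter> {0..<n}. qbit i k * 2 ^ k)"

definition agree_outside :: "nat set \<Rightarrow> nat \<Rightarrow> nat \<Rightarrow> nat \<Rightarrow> bool" where
  "agree_outside B n i i' \<longleftrightarrow> (\<forall>k<n. k \<notin> B \<longrightarrow> qbit i k = qbit i' k)"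

text \<open>E = I_{[n]\B} (x) E' for a linear superoperator E' on the qubits in B,
  given by its coefficients T: E'(|c'><d'|) = sum_{c,d} T c d c' d' |c><d|.\<close>
definition identity_outside :: "nat \<Rightarrow> nat set \<Rightarrow> (complex mat \<Rightarrow> complex mat) \<Rightarrow> bool" where
  "identity_outside n B E \<longleftrightarrow> (\<exists>T :: nat \<Rightarrow> nat \<Rightarrow> nat \<Rightarrow> nat \<Rightarrow> complex.
     \<forall>\<rho> \<in> carrier_mat (2 ^ n) (2 ^ n). E \<rho> = mat (2 ^ n) (2 ^ n) (\<lambda>(i, j).
       \<Sum>(i', j') \<in> {(i', j'). i' < 2 ^ n \<and> j' < 2 ^ n \<and> agree_outside B n i i' \<and> agree_outside B n j j'}.
         T (restrict_idx B n i) (restrict_idx B n j) (restrict_idx B n i') (restrict_idx B n j') * \<rho> $$ (i', j')))"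

definition mtrace :: "complex mat \<Rightarrow> complex" where
  "mtrace A = (\<Sum>i<dim_row A. A $$ (i, i))"

definition trace_preserving :: "nat \<Rightarrow> (complex mat \<Rightarrow> complex mat) \<Rightarrow> bool" where
  "trace_preserving n E \<longleftrightarrow> (\<forall>\<rho> \<in> carrier_mat (2 ^ n) (2 ^ n). mtrace (E \<rho>) = mtrace \<rho>)"

definition density_op :: "nat \<Rightarrow> complex mat \<Rightarrow> bool" where
  "density_op n \<rho> \<longleftrightarrow> \<rho> \<in> carrier_mat (2 ^ n) (2 ^ n) \<and>
     (\<forall>v \<in> carrier_vec (2 ^ n). conjugate v \<bullet> (\<rho> *\<^sub>v v) \<in> \<real> \<and> Re (conjugate v \<bullet> (\<rho> *\<^sub>v v)) \<ge> 0) \<and>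
     mtrace \<rho> = 1"

end

theory Submission
  imports Defs "HOL-Library.FuncSet"
begin

definition om :: "nat \<Rightarrow> nat \<Rightarrow> complex" where
  "om a b = (if a = 0 \<or> b = 0 \<or> a = b then 1 else
     if (a = 1 \<and> b = 2) \<or> (a = 2 \<and> b = 3) \<or> (a = 3 \<and> b = 1) then \<i> else - \<i>)"

definition px :: "nat \<Rightarrow> nat \<Rightarrow> nat" where
  "px a b = (if a = 0 then b else if b = 0 then a else if a = b then 0 else 6 - a - b)"

definition pe :: "nat \<Rightarrow> nat \<Rightarrow> nat \<Rightarrow> complex" where
  "pe a s t = (if a = 1 then (if s = t then 0 else 1)
     else if a = 2 then (if s = t then 0 else if s = 0 then - \<i> else \<i>)
     else if a = 3 then (if s = t then (if s = 0 then 1 else -1) else 0)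
     else (if s = t then 1 else 0))"

lemma pauli1_pe: "s < 2 \<Longrightarrow> t < 2 \<Longrightarrow> pauli1 a $$ (s,t) = pe a s t"
  by (auto simp: pauli1_def pe_def mat_of_rows_list_def less_2_cases_iff)

lemma lt4: "(a::nat) < 4 \<Longrightarrow> a = 0 \<or> a = 1 \<or> a = 2 \<or> a = 3" by auto

lemma pe_mult:
  assumes "a < 4" "b < 4" "s < 2" "t < 2"
  shows "pe a s 0 * pe b 0 t + pe a s 1 * pe b 1 t = om a b * pe (px a b) s t"
proof -
  have "s = 0 \<or> s = 1" "t = 0 \<or> t = 1" using assms by auto
  then show ?thesis using lt4[OF assms(1)] lt4[OF assms(2)]
    apply (elim disjE) by (simp_all add: pe_def om_def px_def)
qed

lemma qbit_lt2[simp]: "qbit i k < 2" by (simp add: qbit_def)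

lemma qbit_low: "l < 2^n \<Longrightarrow> k < n \<Longrightarrow> qbit (l + 2^n) k = qbit l k"
proof -
  assume k: "k < n"
  have "(2::nat)^n = 2^k * 2^(n-k)" using k by (simp flip: power_add)
  hence "(l + 2^n) div 2^k = l div 2^k + 2^(n-k)" by simp
  moreover have "(2::nat)^(n-k) = 2 * 2^(n-k-1)" using k by (simp flip: power_Suc)
  ultimately show ?thesis unfolding qbit_def by simp
qed

lemma qbit_top0: "l < 2^n \<Longrightarrow> qbit l n = 0"
  by (simp add: qbit_def)

lemma qbit_top1: "l < 2^n \<Longrightarrow> qbit (l + 2^n) n = 1"
  by (simp add: qbit_def)

lemma bits_sum:
  "(\<Sum>l<2^n. \<Prod>k<n. F k (qbit l k)) = (\<Prod>k<n. (F k 0 + F k 1 :: 'a::comm_semiring_1))"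
proof (induction n)
  case 0 then show ?case by simp
next
  case (Suc n)
  have split: "{..<2^Suc n} = {..<2^n} \<union> (\<lambda>l. l + 2^n) ` {..<(2::nat)^n}"
  proof (intro equalityI subsetI)
    fix x :: nat assume "x \<in> {..<2^Suc n}"
    then show "x \<in> {..<2^n} \<union> (\<lambda>l. l + 2^n) ` {..<(2::nat)^n}"
      by (cases "x < 2^n") (auto intro!: image_eqI[where x="x - 2^n"])
  qed auto
  have disj: "{..<2^n} \<inter> (\<lambda>l. l + 2^n) ` {..<(2::nat)^n} = {}" by auto
  have "(\<Sum>l<2^Suc n. \<Prod>k<Suc n. F k (qbit l k)) =
     (\<Sum>l<2^n. \<Prod>k<Suc n. F k (qbit l k)) + (\<Sum>l\<in>(\<lambda>l. l + 2^n) ` {..<(2::nat)^n}. \<Prod>k<Suc n. F k (qbit l k))"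
    unfolding split by (rule sum.union_disjoint) (use disj in auto)
  also have "(\<Sum>l\<in>(\<lambda>l. l + 2^n) ` {..<(2::nat)^n}. \<Prod>k<Suc n. F k (qbit l k))
      = (\<Sum>l<2^n. \<Prod>k<Suc n. F k (qbit (l + 2^n) k))"
    by (subst sum.reindex) (auto simp: inj_on_def)
  also have "\<dots> = (\<Sum>l<2^n. (\<Prod>k<n. F k (qbit l k)) * F n 1)"
    by (rule sum.cong) (auto simp: qbit_low qbit_top1 intro!: prod.cong)
  also have "(\<Sum>l<2^n. \<Prod>k<Suc n. F k (qbit l k)) = (\<Sum>l<2^n. (\<Prod>k<n. F k (qbit l k)) * F n 0)"
    by (rule sum.cong) (auto simp: qbit_top0)
  finally show ?case using Suc by (simp add: sum_distrib_right[symmetric] distrib_left)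
qed

lemma ps_carrier[simp]: "pauli_string n p \<in> carrier_mat (2^n) (2^n)"
  by (simp add: pauli_string_def)
lemma ps_dim[simp]: "dim_row (pauli_string n p) = 2^n" "dim_col (pauli_string n p) = 2^n"
  by (simp_all add: pauli_string_def)

lemma ps_index: "i < 2^n \<Longrightarrow> j < 2^n \<Longrightarrow>
   pauli_string n p $$ (i,j) = (\<Prod>k<n. pe (p k) (qbit i k) (qbit j k))"
  by (simp add: pauli_string_def pauli1_pe)

lemma ps_mult:
  assumes "\<forall>k<n. p k < 4" "\<forall>k<n. q k < 4"
  shows "pauli_string n p * pauli_string n q =
    (\<Prod>k<n. om (p k) (q k)) \<cdot>\<^sub>m pauli_string n (\<lambda>k. px (p k) (q k))"
proof (rule eq_matI)
  fix i j assume ij: "i < dim_row ((\<Prod>k<n. om (p k) (q k)) \<cdot>\<^sub>m pauli_string n (\<lambda>k. px (p k) (q k)))"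
     "j < dim_col ((\<Prod>k<n. om (p k) (q k)) \<cdot>\<^sub>m pauli_string n (\<lambda>k. px (p k) (q k)))"
  hence i: "i < 2^n" and j: "j < 2^n" by simp_all
  have "(pauli_string n p * pauli_string n q) $$ (i,j) =
     (\<Sum>l<2^n. pauli_string n p $$ (i,l) * pauli_string n q $$ (l,j))"
    using i j by (simp add: scalar_prod_def atLeast0LessThan)
  also have "\<dots> = (\<Sum>l<2^n. \<Prod>k<n. pe (p k) (qbit i k) (qbit l k) * pe (q k) (qbit l k) (qbit j k))"
    using i j by (intro sum.cong) (auto simp: ps_index prod.distrib)
  also have "\<dots> = (\<Prod>k<n. pe (p k) (qbit i k) 0 * pe (q k) 0 (qbit j k) + pe (p k) (qbit i k) 1 * pe (q k) 1 (qbit j k))"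
    by (rule bits_sum)
  also have "\<dots> = (\<Prod>k<n. om (p k) (q k) * pe (px (p k) (q k)) (qbit i k) (qbit j k))"
  proof (rule prod.cong[OF refl])
    fix k assume "k \<in> {..<n}"
    then show "pe (p k) (qbit i k) 0 * pe (q k) 0 (qbit j k) + pe (p k) (qbit i k) 1 * pe (q k) 1 (qbit j k) =
      om (p k) (q k) * pe (px (p k) (q k)) (qbit i k) (qbit j k)"
      using assms pe_mult[of "p k" "q k" "qbit i k" "qbit j k"] by simp
  qed
  also have "\<dots> = ((\<Prod>k<n. om (p k) (q k)) \<cdot>\<^sub>m pauli_string n (\<lambda>k. px (p k) (q k))) $$ (i,j)"
    using i j by (simp add: ps_index prod.distrib)
  finally show "(pauli_string n p * pauli_string n q) $$ (i,j) = ((\<Prod>k<n. om (p k) (q k)) \<cdot>\<^sub>m pauli_string n (\<lambda>k. px (p k) (q k))) $$ (i,j)" .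
qed auto

lemma lin_mult:
  assumes A: "A \<in> carrier_mat N N" and B: "B \<in> carrier_mat N N"
  shows "(x1 \<cdot>\<^sub>m 1\<^sub>m N + y1 \<cdot>\<^sub>m A) * (x2 \<cdot>\<^sub>m 1\<^sub>m N + y2 \<cdot>\<^sub>m B) =
    (x1*x2) \<cdot>\<^sub>m 1\<^sub>m N + (x1*y2) \<cdot>\<^sub>m B + (y1*x2) \<cdot>\<^sub>m A + (y1*y2) \<cdot>\<^sub>m (A*B :: complex mat)"
proof -
  have "(x1 \<cdot>\<^sub>m 1\<^sub>m N + y1 \<cdot>\<^sub>m A) * (x2 \<cdot>\<^sub>m 1\<^sub>m N + y2 \<cdot>\<^sub>m B) =
     (x1 \<cdot>\<^sub>m 1\<^sub>m N) * (x2 \<cdot>\<^sub>m 1\<^sub>m N + y2 \<cdot>\<^sub>m B) + (y1 \<cdot>\<^sub>m A) * (x2 \<cdot>\<^sub>m 1\<^sub>m N + y2 \<cdot>\<^sub>m B)"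
    using A B by (intro add_mult_distrib_mat) auto
  also have "(x1 \<cdot>\<^sub>m 1\<^sub>m N) * (x2 \<cdot>\<^sub>m 1\<^sub>m N + y2 \<cdot>\<^sub>m B) = x1 \<cdot>\<^sub>m (x2 \<cdot>\<^sub>m 1\<^sub>m N + y2 \<cdot>\<^sub>m B)"
    using A B by (subst mult_smult_assoc_mat[of _ N N]) auto
  also have "(y1 \<cdot>\<^sub>m A) * (x2 \<cdot>\<^sub>m 1\<^sub>m N + y2 \<cdot>\<^sub>m B) = y1 \<cdot>\<^sub>m (A * (x2 \<cdot>\<^sub>m 1\<^sub>m N + y2 \<cdot>\<^sub>m B))"
    using A B by (subst mult_smult_assoc_mat[of _ N N]) auto
  also have "A * (x2 \<cdot>\<^sub>m 1\<^sub>m N + y2 \<cdot>\<^sub>m B) = A * (x2 \<cdot>\<^sub>m 1\<^sub>m N) + A * (y2 \<cdot>\<^sub>m B)"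
    using A B by (intro mult_add_distrib_mat) auto
  also have "A * (x2 \<cdot>\<^sub>m 1\<^sub>m N) = x2 \<cdot>\<^sub>m A"
    using A by (subst mult_smult_distrib[of _ N N]) auto
  also have "A * (y2 \<cdot>\<^sub>m B) = y2 \<cdot>\<^sub>m (A * B)"
    using A B by (subst mult_smult_distrib[of _ N N]) auto
  finally show ?thesis
    using A B by (intro eq_matI) (auto simp: algebra_simps)
qed

lemma lin_left:
  assumes A: "A \<in> carrier_mat N N" and B: "B \<in> carrier_mat N N"
  shows "A * (x \<cdot>\<^sub>m 1\<^sub>m N + y \<cdot>\<^sub>m B) = x \<cdot>\<^sub>m A + y \<cdot>\<^sub>m (A * B :: complex mat)"
proof -
  have "A * (x \<cdot>\<^sub>m 1\<^sub>m N + y \<cdot>\<^sub>m B) = A * (x \<cdot>\<^sub>m 1\<^sub>m N) + A * (y \<cdot>\<^sub>m B)"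
    using A B by (intro mult_add_distrib_mat) auto
  also have "A * (x \<cdot>\<^sub>m 1\<^sub>m N) = x \<cdot>\<^sub>m A"
    using A by (subst mult_smult_distrib[of _ N N]) auto
  also have "A * (y \<cdot>\<^sub>m B) = y \<cdot>\<^sub>m (A * B)"
    using A B by (subst mult_smult_distrib[of _ N N]) auto
  finally show ?thesis .
qed

lemma lin_right:
  assumes A: "A \<in> carrier_mat N N" and B: "B \<in> carrier_mat N N"
  shows "(x \<cdot>\<^sub>m 1\<^sub>m N + y \<cdot>\<^sub>m B) * A = x \<cdot>\<^sub>m A + y \<cdot>\<^sub>m (B * A :: complex mat)"
proof -
  have "(x \<cdot>\<^sub>m 1\<^sub>m N + y \<cdot>\<^sub>m B) * A = (x \<cdot>\<^sub>m 1\<^sub>m N) * A + (y \<cdot>\<^sub>m B) * A"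
    using A B by (intro add_mult_distrib_mat) auto
  also have "(x \<cdot>\<^sub>m 1\<^sub>m N) * A = x \<cdot>\<^sub>m A"
    using A by (subst mult_smult_assoc_mat[of _ N N]) auto
  also have "(y \<cdot>\<^sub>m B) * A = y \<cdot>\<^sub>m (B * A)"
    using A B by (subst mult_smult_assoc_mat[of _ N N]) auto
  finally show ?thesis .
qed

definition G :: "nat \<Rightarrow> (nat \<Rightarrow> complex mat) \<Rightarrow> complex \<Rightarrow> nat \<Rightarrow> complex mat" where
  "G N S a i = (1/2) \<cdot>\<^sub>m 1\<^sub>m N + (a/2) \<cdot>\<^sub>m S i"

fun Pj :: "nat \<Rightarrow> (nat \<Rightarrow> complex mat) \<Rightarrow> (nat \<Rightarrow> complex) \<Rightarrow> nat \<Rightarrow> complex mat" where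
  "Pj N S f 0 = 1\<^sub>m N"
| "Pj N S f (Suc k) = Pj N S f k * G N S (f k) k"

lemma proj_upto_Pj:
  assumes "\<forall>i<k. S i \<in> carrier_mat (2^n) (2^n)"
  shows "proj_upto n S x k = Pj (2^n) S (\<lambda>i. (-1)^qbit x i) k"
  using assms
proof (induction k)
  case (Suc k)
  have "(1/2) \<cdot>\<^sub>m (1\<^sub>m (2 ^ n) + ((-1) ^ qbit x k) \<cdot>\<^sub>m S k) = G (2^n) S ((-1)^qbit x k) k"
    using Suc.prems unfolding G_def by (intro eq_matI) (auto simp: algebra_simps)
  then show ?case using Suc by simp
qed simp

locale stabs =
  fixes N :: nat and r :: nat and S :: "nat \<Rightarrow> complex mat"
  assumes Sc: "\<And>i. i < r \<Longrightarrow> S i \<in> carrier_mat N N"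
    and Ssq: "\<And>i. i < r \<Longrightarrow> S i * S i = 1\<^sub>m N"
    and Scomm: "\<And>i j. i < r \<Longrightarrow> j < r \<Longrightarrow> S i * S j = S j * S i"
begin

lemma Sc'[simp]: "i < r \<Longrightarrow> S i \<in> carrier_mat N N" using Sc by blast

lemma multN[simp]: "A \<in> carrier_mat N N \<Longrightarrow> B \<in> carrier_mat N N \<Longrightarrow> A * B \<in> carrier_mat N N"
  by (rule mult_carrier_mat)

lemma Sdim[simp]: "i < r \<Longrightarrow> dim_row (S i) = N" "i < r \<Longrightarrow> dim_col (S i) = N"
  using Sc unfolding carrier_mat_def by auto

lemma Gc[simp]: "i < r \<Longrightarrow> G N S a i \<in> carrier_mat N N"
  using Sc by (simp add: G_def)

lemma Gdim[simp]: "i < r \<Longrightarrow> dim_row (G N S a i) = N" "i < r \<Longrightarrow> dim_col (G N S a i) = N"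
  using Gc unfolding carrier_mat_def by blast+

lemma Pjc[simp]: "k \<le> r \<Longrightarrow> Pj N S f k \<in> carrier_mat N N"
  by (induction k) auto

lemma Pjdim[simp]: "k \<le> r \<Longrightarrow> dim_row (Pj N S f k) = N" "k \<le> r \<Longrightarrow> dim_col (Pj N S f k) = N"
  using Pjc by blast+

lemma Pjc'[simp]: "k < r \<Longrightarrow> Pj N S f k \<in> carrier_mat N N"
  by simp

lemma G_pass:
  assumes A: "A \<in> carrier_mat N N" and i: "i < r" and e: "A * S i = e \<cdot>\<^sub>m (S i * A)"
  shows "A * G N S a i = G N S (e*a) i * A"
proof -
  have "A * G N S a i = (1/2) \<cdot>\<^sub>m A + (a/2) \<cdot>\<^sub>m (A * S i)"
    unfolding G_def using A Sc[OF i] by (rule lin_left)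
  moreover have "G N S (e*a) i * A = (1/2) \<cdot>\<^sub>m A + (e*a/2) \<cdot>\<^sub>m (S i * A)"
    unfolding G_def using A Sc[OF i] by (rule lin_right)
  ultimately show ?thesis unfolding e using A Sc[OF i]
    by (intro eq_matI) (auto simp: algebra_simps)
qed

lemma G_comm1:
  assumes A: "A \<in> carrier_mat N N" and i: "i < r" and e: "A * S i = S i * A"
  shows "A * G N S a i = G N S a i * A"
proof -
  have "1 \<cdot>\<^sub>m (S i * A) = S i * A" using A Sc[OF i] by (intro eq_matI) auto
  then show ?thesis using G_pass[OF A i, of 1 a] e by simp
qed

lemma G_S_comm: "i < r \<Longrightarrow> j < r \<Longrightarrow> G N S a i * S j = S j * G N S a i"
  using G_comm1[of "S j" i a] Sc Scomm by metis

lemma G_comm: "i < r \<Longrightarrow> j < r \<Longrightarrow> G N S a i * G N S b j = G N S b j * G N S a i"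
  using G_comm1[of "G N S a i" j b] G_S_comm by simp

lemma G_sq:
  assumes i: "i < r" shows "G N S a i * G N S b i =
     ((1+a*b)/4) \<cdot>\<^sub>m 1\<^sub>m N + ((a+b)/4) \<cdot>\<^sub>m S i"
  unfolding G_def lin_mult[OF Sc[OF i] Sc[OF i]] Ssq[OF i] using Sc[OF i]
  by (intro eq_matI) (auto simp: algebra_simps add_divide_distrib)

lemma G_idem: "i < r \<Longrightarrow> a*a = 1 \<Longrightarrow> G N S a i * G N S a i = G N S a i"
  unfolding G_sq by (auto simp: G_def)

lemma G_orth: "i < r \<Longrightarrow> a*a = 1 \<Longrightarrow> b = -a \<Longrightarrow> G N S a i * G N S b i = 0\<^sub>m N N"
  unfolding G_sq using Sc by (intro eq_matI) auto

lemma S_G1: "i < r \<Longrightarrow> S i * G N S 1 i = G N S 1 i"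
  unfolding G_def using Sc Ssq
  by (subst lin_left[of _ N]) (auto intro!: eq_matI simp: algebra_simps)

lemma Pj_pass:
  assumes A: "A \<in> carrier_mat N N" and k: "k \<le> r"
    and e: "\<forall>i<k. A * S i = e i \<cdot>\<^sub>m (S i * A)"
  shows "A * Pj N S f k = Pj N S (\<lambda>i. e i * f i) k * A"
  using k e
proof (induction k)
  case 0 then show ?case using A by simp
next
  case (Suc k)
  have k: "k < r" using Suc by simp
  have "A * Pj N S f (Suc k) = (A * Pj N S f k) * G N S (f k) k"
    using A k by (simp add: assoc_mult_mat[of _ N N _ N _ N])
  also have "\<dots> = Pj N S (\<lambda>i. e i * f i) k * (A * G N S (f k) k)"
    using Suc A k by (simp add: assoc_mult_mat[of _ N N _ N _ N])
  also have "A * G N S (f k) k = G N S (e k * f k) k * A"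
    using Suc A k by (intro G_pass) auto
  finally show ?case
    using A k by (simp add: assoc_mult_mat[of _ N N _ N _ N])
qed

lemma Pj_comm1:
  assumes A: "A \<in> carrier_mat N N" and k: "k \<le> r"
    and e: "\<forall>i<k. A * S i = S i * A"
  shows "A * Pj N S f k = Pj N S f k * A"
proof -
  have "\<forall>i<k. A * S i = 1 \<cdot>\<^sub>m (S i * A)"
    using e A k Sc by (auto intro!: eq_matI)
  from Pj_pass[OF A k this] show ?thesis by simp
qed

lemma G_Pj_comm: "i < r \<Longrightarrow> k \<le> r \<Longrightarrow> G N S a i * Pj N S f k = Pj N S f k * G N S a i"
  by (rule Pj_comm1) (auto simp: G_S_comm)

lemma Pj_mult:
  assumes k: "k \<le> r" and f: "\<forall>i<k. f i \<in> {1,-1}" and g: "\<forall>i<k. g i \<in> {1,-1}"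
  shows "Pj N S f k * Pj N S g k = (if \<forall>i<k. f i = g i then Pj N S f k else 0\<^sub>m N N)"
  using k f g
proof (induction k)
  case 0 then show ?case by simp
next
  case (Suc k)
  have k: "k < r" using Suc by simp
  have "Pj N S f (Suc k) * Pj N S g (Suc k) =
     Pj N S f k * (G N S (f k) k * Pj N S g k) * G N S (g k) k"
    using k by (simp add: assoc_mult_mat[of _ N N _ N _ N])
  also have "G N S (f k) k * Pj N S g k = Pj N S g k * G N S (f k) k"
    using k by (simp add: G_Pj_comm)
  also have "Pj N S f k * (Pj N S g k * G N S (f k) k) * G N S (g k) k =
      (Pj N S f k * Pj N S g k) * (G N S (f k) k * G N S (g k) k)"
    using k by (simp add: assoc_mult_mat[of _ N N _ N _ N])
  also have "Pj N S f k * Pj N S g k = (if \<forall>i<k. f i = g i then Pj N S f k else 0\<^sub>m N N)"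
    using Suc by simp
  finally have eq: "Pj N S f (Suc k) * Pj N S g (Suc k) =
     (if \<forall>i<k. f i = g i then Pj N S f k else 0\<^sub>m N N) * (G N S (f k) k * G N S (g k) k)" .
  have fk: "f k \<in> {1,-1}" and gk: "g k \<in> {1,-1}" using Suc.prems by auto
  show ?case
  proof (cases "f k = g k")
    case True
    then have "G N S (f k) k * G N S (g k) k = G N S (f k) k"
      using fk k G_idem[of k "f k"] by auto
    then show ?thesis unfolding eq using True k
      by (auto simp: less_Suc_eq)
  next
    case False
    then have "G N S (f k) k * G N S (g k) k = 0\<^sub>m N N"
      using fk gk k by (intro G_orth) auto
    then show ?thesis unfolding eq using False k
      by (auto simp: less_Suc_eq)
  qed
qed

lemma Pj1_S: assumes "j < k" "k \<le> r" shows "S j * Pj N S (\<lambda>_. 1) k = Pj N S (\<lambda>_. 1) k"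
  using assms
proof (induction k)
  case 0 then show ?case by simp
next
  case (Suc k)
  have k: "k < r" and j: "j < r" using Suc by auto
  have "S j * Pj N S (\<lambda>_. 1) (Suc k) = (S j * Pj N S (\<lambda>_. 1) k) * G N S 1 k"
    using k j by (simp add: assoc_mult_mat[of _ N N _ N _ N])
  show ?case
  proof (cases "j = k")
    case True
    have "S j * Pj N S (\<lambda>_. 1) k = Pj N S (\<lambda>_. 1) k * S j"
      using j k Scomm by (intro Pj_comm1) (auto simp: Sc)
    then have "S j * Pj N S (\<lambda>_. 1) (Suc k) = (Pj N S (\<lambda>_. 1) k * S j) * G N S 1 k"
      using k j by (simp add: assoc_mult_mat[of _ N N _ N _ N, symmetric])
    then have "S j * Pj N S (\<lambda>_. 1) (Suc k) = Pj N S (\<lambda>_. 1) k * (S j * G N S 1 k)"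
      using k j by (simp add: assoc_mult_mat[of _ N N _ N _ N])
    then show ?thesis using True k S_G1 by simp
  next
    case False
    then have "S j * Pj N S (\<lambda>_. 1) k = Pj N S (\<lambda>_. 1) k" using Suc by simp
    then show ?thesis using k j by (simp add: assoc_mult_mat[of _ N N _ N _ N, symmetric])
  qed
qed

lemma Pj1_S': assumes "j < k" "k \<le> r" shows "Pj N S (\<lambda>_. 1) k * S j = Pj N S (\<lambda>_. 1) k"
proof -
  have "S j * Pj N S (\<lambda>_. 1) k = Pj N S (\<lambda>_. 1) k * S j"
    using assms Scomm by (intro Pj_comm1) (auto simp: Sc)
  then show ?thesis using Pj1_S[OF assms] by simp
qed

lemma gen_group_carrier: "T \<in> gen_group N (S ` {0..<r}) \<Longrightarrow> T \<in> carrier_mat N N"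
  by (induction rule: gen_group.induct) (auto simp: Sc)

lemma gen_group_Pj1:
  assumes "T \<in> gen_group N (S ` {0..<r})"
  shows "T * Pj N S (\<lambda>_. 1) r = Pj N S (\<lambda>_. 1) r \<and> Pj N S (\<lambda>_. 1) r * T = Pj N S (\<lambda>_. 1) r"
  using assms
proof (induction rule: gen_group.induct)
  case one then show ?case by simp
next
  case (mult g A)
  obtain j where j: "j < r" "g = S j" using mult by auto
  have Ac: "A \<in> carrier_mat N N" using mult gen_group_carrier by auto
  have "g * A * Pj N S (\<lambda>_. 1) r = g * (A * Pj N S (\<lambda>_. 1) r)"
    using j Ac by (simp add: assoc_mult_mat[of _ N N _ N _ N])
  moreover have "Pj N S (\<lambda>_. 1) r * (g * A) = (Pj N S (\<lambda>_. 1) r * g) * A"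
    using j Ac by (simp add: assoc_mult_mat[of _ N N _ N _ N])
  ultimately show ?case using mult j Pj1_S Pj1_S' by simp
qed

end

definition sg :: "nat \<Rightarrow> nat \<Rightarrow> complex" where
  "sg a b = (if a = 0 \<or> b = 0 \<or> a = b then 1 else -1)"

lemma om_sg: "a < 4 \<Longrightarrow> b < 4 \<Longrightarrow> om a b = sg a b * om b a"
  using lt4[of a] lt4[of b] by (auto simp: om_def sg_def)

lemma px_comm: "px a b = px b a" by (auto simp: px_def)
lemma px_lt4: "a < 4 \<Longrightarrow> b < 4 \<Longrightarrow> px a b < 4" by (auto simp: px_def)
lemma px_self[simp]: "px a a = 0" by (simp add: px_def)
lemma px_zero: "px 0 0 = 0" by (simp add: px_def)
lemma om_self[simp]: "om a a = 1" by (simp add: om_def)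

definition phases :: "complex set" where "phases = {1, -1, \<i>, -\<i>}"

lemma phases_mult: "a \<in> phases \<Longrightarrow> b \<in> phases \<Longrightarrow> a * b \<in> phases"
  by (auto simp: phases_def)

lemma om_phase: "om a b \<in> phases" by (auto simp: om_def phases_def)

lemma prod_phases: "(\<forall>k\<in>A. f k \<in> phases) \<Longrightarrow> prod f A \<in> phases"
proof (induction A rule: infinite_finite_induct)
  case (infinite A) then show ?case by (simp add: phases_def)
next
  case empty then show ?case by (simp add: phases_def)
next
  case (insert x F) then show ?case by (simp add: phases_mult)
qed

lemma prod_signs: "(\<forall>k\<in>A. f k \<in> {1,-1::complex}) \<Longrightarrow> prod f A \<in> {1,-1}"
proof (induction A rule: infinite_finite_induct)
  case (insert x F) then show ?case by auto
qed auto

lemma sign_sq: "(e::complex) \<in> {1,-1} \<Longrightarrow> e * e = 1" by auto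

lemma sg_sign: "sg a b \<in> {1,-1}" by (simp add: sg_def)

lemma smult_smult_mat: "a \<cdot>\<^sub>m (b \<cdot>\<^sub>m (M :: complex mat)) = (a * b) \<cdot>\<^sub>m M"
  by (intro eq_matI) auto

lemma smult_one_mat'[simp]: "1 \<cdot>\<^sub>m (M :: complex mat) = M"
  by (intro eq_matI) auto

lemma ps_comm:
  assumes p: "\<forall>k<n. p k < 4" and q: "\<forall>k<n. q k < 4"
  shows "pauli_string n p * pauli_string n q =
     (\<Prod>k<n. sg (p k) (q k)) \<cdot>\<^sub>m (pauli_string n q * pauli_string n p)"
proof -
  have "pauli_string n q * pauli_string n p =
    (\<Prod>k<n. om (q k) (p k)) \<cdot>\<^sub>m pauli_string n (\<lambda>k. px (p k) (q k))"
    using ps_mult[OF q p] by (simp add: px_comm)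
  moreover have "(\<Prod>k<n. sg (p k) (q k)) * (\<Prod>k<n. om (q k) (p k)) = (\<Prod>k<n. om (p k) (q k))"
  proof -
    have "\<And>k. k \<in> {..<n} \<Longrightarrow> sg (p k) (q k) * om (q k) (p k) = om (p k) (q k)"
      using p q by (simp add: om_sg[of "p k" "q k" for k])
    then show ?thesis by (simp add: prod.distrib[symmetric])
  qed
  ultimately show ?thesis using ps_mult[OF p q] by (simp add: smult_smult_mat)
qed

lemma qbit_eq_all:
  assumes "i < 2^n" "j < 2^n" "\<forall>k<n. qbit i k = qbit j k"
  shows "i = j"
proof -
  have q: "qbit i m = qbit j m" for m
  proof (cases "m < n")
    case False
    then have "(2::nat)^n \<le> 2^m" by simp
    then have "i < 2^m" "j < 2^m" using assms(1,2) by linarith+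
    then have "i div 2^m = 0" "j div 2^m = 0" by auto
    then show ?thesis by (simp add: qbit_def)
  qed (use assms in auto)
  show ?thesis
  proof (rule bit_eqI)
    fix m show "bit i m = bit j m"
      using q[of m] by (simp add: bit_iff_odd qbit_def odd_iff_mod_2_eq_one)
  qed
qed

lemma ps_zero:
  assumes "\<forall>k<n. p k = 0"
  shows "pauli_string n p = 1\<^sub>m (2^n)"
proof (rule eq_matI)
  fix i j assume "i < dim_row (1\<^sub>m (2^n))" "j < dim_col (1\<^sub>m (2^n))"
  hence i: "i < 2^n" and j: "j < 2^n" by auto
  have "pauli_string n p $$ (i,j) = (\<Prod>k<n. if qbit i k = qbit j k then 1 else 0)"
    using i j assms by (simp add: ps_index pe_def)
  also have "\<dots> = (if i = j then 1 else 0)"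
  proof (cases "i = j")
    case False
    then obtain k where "k < n" "qbit i k \<noteq> qbit j k" using qbit_eq_all[OF i j] by blast
    then have "(\<Prod>k<n. if qbit i k = qbit j k then 1 else 0) = (0::complex)"
      by (intro prod_zero) auto
    then show ?thesis using False by simp
  qed simp
  finally show "pauli_string n p $$ (i,j) = 1\<^sub>m (2^n) $$ (i,j)" using i j by simp
qed auto

lemma ps_sq:
  assumes "\<forall>k<n. p k < 4"
  shows "pauli_string n p * pauli_string n p = 1\<^sub>m (2^n)"
  using ps_mult[OF assms assms] ps_zero[of n "\<lambda>k. px (p k) (p k)"]
  by (simp add: smult_smult_mat)

definition msum :: "nat \<Rightarrow> 'a set \<Rightarrow> ('a \<Rightarrow> complex mat) \<Rightarrow> complex mat" where
  "msum N F h = mat N N (\<lambda>(i,j). \<Sum>a\<in>F. h a $$ (i,j))"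

lemma msum_carrier[simp]: "msum N F h \<in> carrier_mat N N"
  by (simp add: msum_def)
lemma msum_dim[simp]: "dim_row (msum N F h) = N" "dim_col (msum N F h) = N"
  by (simp_all add: msum_def)

lemma msum_index: "i < N \<Longrightarrow> j < N \<Longrightarrow> msum N F h $$ (i,j) = (\<Sum>a\<in>F. h a $$ (i,j))"
  by (simp add: msum_def)

lemma mult_index_N:
  assumes "A \<in> carrier_mat N N" "B \<in> carrier_mat N N" "i < N" "j < N"
  shows "(A * B) $$ (i,j) = (\<Sum>l<N. A $$ (i,l) * B $$ (l,j))"
proof -
  have d: "dim_row A = N" "dim_col A = N" "dim_row B = N" "dim_col B = N" using assms(1,2) by auto
  show ?thesis using assms(3,4) unfolding index_mult_mat(1)[of i A j B, unfolded d, OF assms(3,4)]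
    scalar_prod_def by (simp add: d atLeast0LessThan)
qed

lemma msum_mult_left:
  assumes A: "A \<in> carrier_mat N N" and h: "\<forall>a\<in>F. h a \<in> carrier_mat N N"
  shows "A * msum N F h = msum N F (\<lambda>a. A * h a)"
proof (rule eq_matI)
  fix i j assume "i < dim_row (msum N F (\<lambda>a. A * h a))" "j < dim_col (msum N F (\<lambda>a. A * h a))"
  hence i: "i < N" and j: "j < N" by auto
  have "(A * msum N F h) $$ (i,j) = (\<Sum>l<N. A $$ (i,l) * msum N F h $$ (l,j))"
    using A i j by (intro mult_index_N) auto
  also have "\<dots> = (\<Sum>l<N. \<Sum>a\<in>F. A $$ (i,l) * h a $$ (l,j))"
    using j by (intro sum.cong refl) (simp add: msum_index sum_distrib_left)
  also have "\<dots> = (\<Sum>a\<in>F. \<Sum>l<N. A $$ (i,l) * h a $$ (l,j))"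
    by (rule sum.swap)
  also have "\<dots> = (\<Sum>a\<in>F. (A * h a) $$ (i,j))"
    using A h i j by (intro sum.cong refl) (simp add: mult_index_N)
  also have "\<dots> = msum N F (\<lambda>a. A * h a) $$ (i,j)"
    using i j by (simp add: msum_index)
  finally show "(A * msum N F h) $$ (i,j) = msum N F (\<lambda>a. A * h a) $$ (i,j)" .
qed (use A in auto)

lemma msum_mult_right:
  assumes A: "A \<in> carrier_mat N N" and h: "\<forall>a\<in>F. h a \<in> carrier_mat N N"
  shows "msum N F h * A = msum N F (\<lambda>a. h a * A)"
proof (rule eq_matI)
  fix i j assume "i < dim_row (msum N F (\<lambda>a. h a * A))" "j < dim_col (msum N F (\<lambda>a. h a * A))"
  hence i: "i < N" and j: "j < N" by auto
  have "(msum N F h * A) $$ (i,j) = (\<Sum>l<N. msum N F h $$ (i,l) * A $$ (l,j))"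
    using A i j by (intro mult_index_N) auto
  also have "\<dots> = (\<Sum>l<N. \<Sum>a\<in>F. h a $$ (i,l) * A $$ (l,j))"
    using i by (intro sum.cong refl) (simp add: msum_index sum_distrib_right)
  also have "\<dots> = (\<Sum>a\<in>F. \<Sum>l<N. h a $$ (i,l) * A $$ (l,j))"
    by (rule sum.swap)
  also have "\<dots> = (\<Sum>a\<in>F. (h a * A) $$ (i,j))"
  proof (intro sum.cong refl)
    fix a assume "a \<in> F"
    then show "(\<Sum>l<N. h a $$ (i,l) * A $$ (l,j)) = (h a * A) $$ (i,j)"
      using mult_index_N[of "h a" N A i j] A h i j by simp
  qed
  also have "\<dots> = msum N F (\<lambda>a. h a * A) $$ (i,j)"
    using i j by (simp add: msum_index)
  finally show "(msum N F h * A) $$ (i,j) = msum N F (\<lambda>a. h a * A) $$ (i,j)" .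
qed (use A in auto)

lemma msum_const:
  assumes "\<forall>a\<in>F. h a = c a \<cdot>\<^sub>m M" and "M \<in> carrier_mat N N"
  shows "msum N F h = (\<Sum>a\<in>F. c a) \<cdot>\<^sub>m M"
  using assms by (intro eq_matI) (auto simp: msum_index sum_distrib_right)

lemma msum_cong: "(\<And>a. a \<in> F \<Longrightarrow> h a = g a) \<Longrightarrow> msum N F h = msum N F g"
  unfolding msum_def by (intro eq_matI) auto

lemma msum_union:
  fixes h :: "'a \<Rightarrow> complex mat"
  assumes "finite A" "finite B" "A \<inter> B = {}"
  shows "msum N (A \<union> B) h = msum N A h + msum N B h"
  unfolding msum_def using assms by (intro eq_matI) (simp_all add: sum.union_disjoint)

lemma msum_reindex: "inj_on g A \<Longrightarrow> msum N (g ` A) h = msum N A (\<lambda>x. h (g x))"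
  unfolding msum_def by (intro eq_matI) (auto simp: sum.reindex)

lemma mtrace_comm:
  assumes A: "A \<in> carrier_mat N N" and B: "B \<in> carrier_mat N N"
  shows "mtrace (A * B) = mtrace (B * A)"
proof -
  have "mtrace (A * B) = (\<Sum>i<N. \<Sum>l<N. A $$ (i,l) * B $$ (l,i))"
    using A B by (simp add: mtrace_def scalar_prod_def atLeast0LessThan)
  also have "\<dots> = (\<Sum>l<N. \<Sum>i<N. B $$ (l,i) * A $$ (i,l))"
    by (subst sum.swap) (simp add: mult.commute)
  also have "\<dots> = mtrace (B * A)"
    using A B by (simp add: mtrace_def scalar_prod_def atLeast0LessThan)
  finally show ?thesis .
qed

lemma mtrace_smult: "A \<in> carrier_mat N N \<Longrightarrow> mtrace (c \<cdot>\<^sub>m A) = c * mtrace A"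
  unfolding mtrace_def sum_distrib_left by (intro sum.cong) auto

lemma mtrace_msum:
  assumes "\<forall>a\<in>F. h a \<in> carrier_mat N N"
  shows "mtrace (msum N F h) = (\<Sum>a\<in>F. mtrace (h a))"
proof -
  have "mtrace (msum N F h) = (\<Sum>i<N. \<Sum>a\<in>F. h a $$ (i,i))"
    unfolding mtrace_def by (intro sum.cong) (auto simp: msum_index)
  also have "\<dots> = (\<Sum>a\<in>F. \<Sum>i<N. h a $$ (i,i))" by (rule sum.swap)
  also have "\<dots> = (\<Sum>a\<in>F. mtrace (h a))"
    using assms unfolding mtrace_def by (intro sum.cong) auto
  finally show ?thesis .
qed

lemma Pj_cong: "(\<forall>i<k. f i = g i) \<Longrightarrow> Pj N S f k = Pj N S g k"
  by (induction k) auto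

context stabs begin

lemma G_sum: "i < r \<Longrightarrow> G N S 1 i + G N S (-1) i = 1\<^sub>m N"
  unfolding G_def by (intro eq_matI) auto

lemma Psum: "k \<le> r \<Longrightarrow> msum N {..<2^k} (\<lambda>x. Pj N S (\<lambda>i. (-1)^qbit x i) k) = 1\<^sub>m N"
proof (induction k)
  case 0
  show ?case unfolding msum_def by (intro eq_matI) auto
next
  case (Suc k)
  let ?f = "\<lambda>x i. (-1::complex)^qbit x i"
  have k: "k < r" using Suc by simp
  have split: "{..<2^Suc k} = {..<2^k} \<union> (\<lambda>l. l + 2^k) ` {..<(2::nat)^k}"
  proof (intro equalityI subsetI)
    fix x :: nat assume "x \<in> {..<2^Suc k}"
    then show "x \<in> {..<2^k} \<union> (\<lambda>l. l + 2^k) ` {..<(2::nat)^k}"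
      by (cases "x < 2^k") (auto intro!: image_eqI[where x="x - 2^k"])
  qed auto
  have disj: "{..<2^k} \<inter> (\<lambda>l. l + 2^k) ` {..<(2::nat)^k} = {}" by auto
  have "msum N {..<2^Suc k} (\<lambda>x. Pj N S (?f x) (Suc k)) =
     msum N {..<2^k} (\<lambda>x. Pj N S (?f x) (Suc k)) + msum N ((\<lambda>l. l + 2^k) ` {..<(2::nat)^k}) (\<lambda>x. Pj N S (?f x) (Suc k))"
    unfolding split by (rule msum_union) (use disj in auto)
  also have "msum N {..<2^k} (\<lambda>x. Pj N S (?f x) (Suc k)) = msum N {..<2^k} (\<lambda>x. Pj N S (?f x) k * G N S 1 k)"
    by (rule msum_cong) (simp add: qbit_top0)
  also have "\<dots> = msum N {..<2^k} (\<lambda>x. Pj N S (?f x) k) * G N S 1 k"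
    using k by (subst msum_mult_right) auto
  also have "msum N ((\<lambda>l. l + 2^k) ` {..<(2::nat)^k}) (\<lambda>x. Pj N S (?f x) (Suc k)) =
      msum N {..<2^k} (\<lambda>x. Pj N S (?f (x + 2^k)) (Suc k))"
    by (rule msum_reindex) (auto simp: inj_on_def)
  also have "\<dots> = msum N {..<2^k} (\<lambda>x. Pj N S (?f x) k * G N S (-1) k)"
  proof (rule msum_cong)
    fix x assume x: "x \<in> {..<(2::nat)^k}"
    have "Pj N S (?f (x + 2^k)) k = Pj N S (?f x) k"
      using x by (intro Pj_cong) (auto simp: qbit_low)
    then show "Pj N S (?f (x + 2^k)) (Suc k) = Pj N S (?f x) k * G N S (-1) k"
      using x by (simp add: qbit_top1)
  qed
  also have "\<dots> = msum N {..<2^k} (\<lambda>x. Pj N S (?f x) k) * G N S (-1) k"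
    using k by (subst msum_mult_right) auto
  also have "msum N {..<2^k} (\<lambda>x. Pj N S (?f x) k) = 1\<^sub>m N"
    using Suc.IH k by simp
  finally show ?case using k G_sum[of k] by simp
qed

end

lemma uminus_one_smult: "(-1::complex) \<cdot>\<^sub>m 1\<^sub>m N = - 1\<^sub>m N"
  by (intro eq_matI) auto

lemma phase_sq: "c \<in> phases \<Longrightarrow> c * c = 1 \<or> c * c = -1"
  by (auto simp: phases_def)

lemma smult_mult_smult:
  assumes "A \<in> carrier_mat N N" "B \<in> carrier_mat N N"
  shows "(a \<cdot>\<^sub>m A) * (b \<cdot>\<^sub>m B) = (a * b) \<cdot>\<^sub>m (A * (B :: complex mat))"
  using assms by (simp add: mult_smult_assoc_mat[of _ N N _ N] mult_smult_distrib[of _ N N _ N] smult_smult_mat mult.commute)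

locale setting =
  fixes n r :: nat and S :: "nat \<Rightarrow> complex mat" and B :: "nat set"
  assumes gens: "stabilizer_generators n r S" and recov: "recoverable n r S B"
begin

lemma S_pauli: "i < r \<Longrightarrow> \<exists>c p. c \<in> phases \<and> (\<forall>k<n. p k < 4) \<and> S i = c \<cdot>\<^sub>m pauli_string n p"
  using gens unfolding stabilizer_generators_def is_pauli_def pauli_on_def phases_def by blast

lemma S_carrier: "i < r \<Longrightarrow> S i \<in> carrier_mat (2^n) (2^n)"
  using S_pauli by fastforce

lemma S_sq: assumes i: "i < r" shows "S i * S i = 1\<^sub>m (2^n)"
proof -
  obtain c p where c: "c \<in> phases" and p: "\<forall>k<n. p k < 4" and S: "S i = c \<cdot>\<^sub>m pauli_string n p"
    using S_pauli[OF i] by blast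
  have sq: "S i * S i = (c * c) \<cdot>\<^sub>m 1\<^sub>m (2^n)"
    unfolding S by (simp add: smult_mult_smult[of _ "2^n"] ps_sq[OF p])
  show ?thesis
  proof (cases "c * c = 1")
    case True then show ?thesis using sq by simp
  next
    case False
    then have "c * c = -1" using phase_sq[OF c] by simp
    then have m1: "S i * S i = - 1\<^sub>m (2^n)" using sq uminus_one_smult by simp
    have "S i * 1\<^sub>m (2^n) \<in> gen_group (2^n) (S ` {0..<r})"
      using i by (intro gen_group.mult gen_group.one) auto
    then have "S i \<in> gen_group (2^n) (S ` {0..<r})" using S_carrier[OF i] by simp
    then have "S i * S i \<in> gen_group (2^n) (S ` {0..<r})"
      using i by (intro gen_group.mult) auto
    then show ?thesis using m1 gens unfolding stabilizer_generators_def stab_group_def by simp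
  qed
qed

lemma S_comm: "i < r \<Longrightarrow> j < r \<Longrightarrow> S i * S j = S j * S i"
  using gens unfolding stabilizer_generators_def by blast

sublocale stabs "2^n" r S
  by unfold_locales (auto simp: S_carrier S_sq S_comm)

definition Pset :: "(nat \<Rightarrow> nat) set" where
  "Pset = {p. (\<forall>k<n. p k < 4) \<and> (\<forall>k<n. k \<notin> B \<longrightarrow> p k = 0)}"

definition esg :: "(nat \<Rightarrow> nat) \<Rightarrow> nat \<Rightarrow> complex" where
  "esg p i = (SOME e. e \<in> {1,-1} \<and> pauli_string n p * S i = e \<cdot>\<^sub>m (S i * pauli_string n p))"

lemma esg:
  assumes p: "\<forall>k<n. p k < 4" and i: "i < r"
  shows "esg p i \<in> {1,-1} \<and> pauli_string n p * S i = esg p i \<cdot>\<^sub>m (S i * pauli_string n p)"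
proof -
  obtain c s where c: "c \<in> phases" and s: "\<forall>k<n. s k < 4" and S: "S i = c \<cdot>\<^sub>m pauli_string n s"
    using S_pauli[OF i] by blast
  let ?e = "\<Prod>k<n. sg (p k) (s k)"
  have e: "?e \<in> {1,-1}" by (rule prod_signs) (auto simp: sg_def)
  have "pauli_string n p * S i = c \<cdot>\<^sub>m (pauli_string n p * pauli_string n s)"
    unfolding S by (simp add: mult_smult_distrib[of _ "2^n" "2^n" _ "2^n"])
  also have "\<dots> = c \<cdot>\<^sub>m (?e \<cdot>\<^sub>m (pauli_string n s * pauli_string n p))"
    by (simp add: ps_comm[OF p s])
  also have "\<dots> = ?e \<cdot>\<^sub>m (S i * pauli_string n p)"
    unfolding S by (simp add: mult_smult_assoc_mat[of _ "2^n" "2^n" _ "2^n"] smult_smult_mat mult.commute)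
  finally have "?e \<in> {1,-1} \<and> pauli_string n p * S i = ?e \<cdot>\<^sub>m (S i * pauli_string n p)"
    using e by blast
  then show ?thesis unfolding esg_def by (rule someI)
qed

lemma esg_sq: assumes "\<forall>k<n. p k < 4" "i < r" shows "esg p i * esg p i = 1"
proof -
  have "esg p i \<in> {1,-1}" using esg[OF assms] by blast
  then show ?thesis by (rule sign_sq)
qed

definition fx :: "nat \<Rightarrow> nat \<Rightarrow> complex" where
  "fx x i = (-1)^qbit x i"

lemma fx_sign: "fx x i \<in> {1,-1}"
proof -
  have "qbit x i = 0 \<or> qbit x i = 1" using qbit_lt2[of x i] by linarith
  then show ?thesis by (auto simp: fx_def)
qed

abbreviation P0 where "P0 \<equiv> Pj (2^n) S (\<lambda>_. 1) r"

lemma proj_eq: "proj n r S x = Pj (2^n) S (fx x) r"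
  unfolding proj_def fx_def by (rule proj_upto_Pj) (auto simp: S_carrier)

lemma proj0: "proj n r S 0 = P0"
  unfolding proj_eq by (rule Pj_cong) (simp add: fx_def qbit_def)

definition good :: "nat \<Rightarrow> (nat \<Rightarrow> nat) \<Rightarrow> bool" where
  "good x p \<longleftrightarrow> p \<in> Pset \<and> (\<forall>i<r. esg p i = fx x i)"

definition Ex :: "nat \<Rightarrow> complex mat" where
  "Ex x = (if \<exists>p. good x p then pauli_string n (SOME p. good x p) else 1\<^sub>m (2^n))"

lemma Ex_carrier[simp]: "Ex x \<in> carrier_mat (2^n) (2^n)"
  by (simp add: Ex_def)

lemma Ex_dim[simp]: "dim_row (Ex x) = 2^n" "dim_col (Ex x) = 2^n"
  by (simp_all add: Ex_def)

lemma Ex_good: assumes "good x p" shows "\<exists>p0. good x p0 \<and> Ex x = pauli_string n p0"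
proof -
  have "good x (SOME p. good x p)" using someI[of "good x" p] assms by simp
  moreover have "Ex x = pauli_string n (SOME p. good x p)" unfolding Ex_def using assms by auto
  ultimately show ?thesis by blast
qed

lemma Pset_lt4: "p \<in> Pset \<Longrightarrow> \<forall>k<n. p k < 4" by (simp add: Pset_def)

lemma Pset_pauli: assumes "p \<in> Pset" shows "pauli_on n B (pauli_string n p)"
proof -
  have "(1::complex) \<in> {1, -1, \<i>, -\<i>}" by simp
  moreover have "\<forall>k<n. p k < 4" "\<forall>k<n. k \<notin> B \<longrightarrow> p k = 0" using assms by (simp_all add: Pset_def)
  moreover have "pauli_string n p = 1 \<cdot>\<^sub>m pauli_string n p" by simp
  ultimately show ?thesis unfolding pauli_on_def by blast
qed

lemma Ex_pauli: "pauli_on n B (Ex x)"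
proof (cases "\<exists>p. good x p")
  case True
  then obtain p0 where g: "good x p0" and E: "Ex x = pauli_string n p0" using Ex_good by blast
  have "p0 \<in> Pset" using g unfolding good_def by simp
  then show ?thesis unfolding E by (rule Pset_pauli)
next
  case False
  have "(\<lambda>_. 0::nat) \<in> Pset" by (simp add: Pset_def)
  then have "pauli_on n B (pauli_string n (\<lambda>_. 0))" by (rule Pset_pauli)
  moreover have "Ex x = pauli_string n (\<lambda>_. 0)"
    unfolding Ex_def if_not_P[OF False] by (simp add: ps_zero)
  ultimately show ?thesis by simp
qed

lemma Ex_sq: "Ex x * Ex x = 1\<^sub>m (2^n)"
proof (cases "\<exists>p. good x p")
  case True
  then obtain p0 where g: "good x p0" and E: "Ex x = pauli_string n p0" using Ex_good by blast
  have "\<forall>k<n. p0 k < 4" using g unfolding good_def by (simp add: Pset_lt4)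
  then show ?thesis unfolding E by (rule ps_sq)
next
  case False
  then show ?thesis unfolding Ex_def if_not_P[OF False] by simp
qed


lemma recov_Q:
  assumes p0: "p0 \<in> Pset" and p: "p \<in> Pset" and e: "\<forall>i<r. esg p0 i = esg p i"
  shows "\<exists>c T. T \<in> stab_group n r S \<and> pauli_string n p0 * pauli_string n p = c \<cdot>\<^sub>m T"
proof -
  let ?Q = "pauli_string n p0 * pauli_string n p"
  have l0: "\<forall>k<n. p0 k < 4" and l: "\<forall>k<n. p k < 4" using p0 p Pset_lt4 by auto
  have pon: "pauli_on n B ?Q"
  proof -
    have "(\<Prod>k<n. om (p0 k) (p k)) \<in> {1, -1, \<i>, -\<i>}"
      using prod_phases[of "{..<n}" "\<lambda>k. om (p0 k) (p k)"] om_phase by (simp add: phases_def)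
    moreover have "\<forall>k<n. px (p0 k) (p k) < 4" using l0 l px_lt4 by auto
    moreover have "\<forall>k<n. k \<notin> B \<longrightarrow> px (p0 k) (p k) = 0" using p0 p by (auto simp: Pset_def px_def)
    ultimately show ?thesis unfolding ps_mult[OF l0 l] pauli_on_def
      by (intro exI[of _ "\<Prod>k<n. om (p0 k) (p k)"] exI[of _ "\<lambda>k. px (p0 k) (p k)"]) simp
  qed
  have comm: "\<forall>i<r. ?Q * S i = S i * ?Q"
  proof (intro allI impI)
    fix i assume i: "i < r"
    have e0: "pauli_string n p0 * S i = esg p i \<cdot>\<^sub>m (S i * pauli_string n p0)"
      using esg[OF l0 i] e i by simp
    have e1: "pauli_string n p * S i = esg p i \<cdot>\<^sub>m (S i * pauli_string n p)"
      using esg[OF l i] by simp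
    let ?e = "esg p i" and ?Pa = "pauli_string n p0" and ?Pb = "pauli_string n p"
    have Si: "S i \<in> carrier_mat (2^n) (2^n)" using i by simp
    have "?Q * S i = ?Pa * (?Pb * S i)"
      by (rule assoc_mult_mat[of _ "2^n" "2^n" _ "2^n" _ "2^n"]) (use Si in auto)
    also have "\<dots> = ?Pa * (?e \<cdot>\<^sub>m (S i * ?Pb))" unfolding e1 ..
    also have "\<dots> = ?e \<cdot>\<^sub>m (?Pa * (S i * ?Pb))"
      by (rule mult_smult_distrib[of _ "2^n" "2^n" _ "2^n"]) (use Si in auto)
    also have "?Pa * (S i * ?Pb) = (?Pa * S i) * ?Pb"
      by (rule assoc_mult_mat[of _ "2^n" "2^n" _ "2^n" _ "2^n", symmetric]) (use Si in auto)
    also have "\<dots> = (?e \<cdot>\<^sub>m (S i * ?Pa)) * ?Pb" unfolding e0 ..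
    also have "\<dots> = ?e \<cdot>\<^sub>m ((S i * ?Pa) * ?Pb)"
      by (rule mult_smult_assoc_mat[of _ "2^n" "2^n" _ "2^n"]) (use Si in auto)
    also have "(S i * ?Pa) * ?Pb = S i * ?Q"
      by (rule assoc_mult_mat[of _ "2^n" "2^n" _ "2^n" _ "2^n"]) (use Si in auto)
    finally have "?Q * S i = (?e * ?e) \<cdot>\<^sub>m (S i * ?Q)" by (simp add: smult_smult_mat)
    then show "?Q * S i = S i * ?Q" using esg_sq[OF l i] by simp
  qed
  have "\<exists>T \<in> stab_group n r S. \<exists>c \<in> {1, -1, \<i>, -\<i>}. ?Q = c \<cdot>\<^sub>m T"
    using recov pon comm unfolding recoverable_def by simp
  then obtain T c where "T \<in> stab_group n r S" "?Q = c \<cdot>\<^sub>m T" by blast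
  then show ?thesis by blast
qed

lemma stab_P0: "T \<in> stab_group n r S \<Longrightarrow> T * P0 = P0 \<and> P0 * T = P0"
  unfolding stab_group_def by (rule gen_group_Pj1)

lemma stab_carrier: "T \<in> stab_group n r S \<Longrightarrow> T \<in> carrier_mat (2^n) (2^n)"
  unfolding stab_group_def by (rule gen_group_carrier)

end

context setting begin

abbreviation "NN \<equiv> (2::nat)^n"

lemma Pjfx_c[simp]: "Pj NN S f r \<in> carrier_mat NN NN" by simp

lemmas asc = assoc_mult_mat[of _ NN NN _ NN _ NN]

lemma sign_prod: "(a::complex) \<in> {1,-1} \<Longrightarrow> b \<in> {1,-1} \<Longrightarrow> a * b \<in> {1,-1}" by auto

lemma left_lem:
  assumes p: "p \<in> Pset"
  shows "\<exists>\<mu>. Pj NN S (fx x) r * pauli_string n p * P0 = \<mu> \<cdot>\<^sub>m (Ex x * P0)"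
proof -
  have l: "\<forall>k<n. p k < 4" using p Pset_lt4 by auto
  define g where "g i = esg p i * fx x i" for i
  have gs: "\<forall>i<r. g i \<in> {1,-1}"
  proof (intro allI impI)
    fix i assume i: "i < r"
    show "g i \<in> {1,-1}" unfolding g_def using esg[OF l i] fx_sign[of x i] by (intro sign_prod) auto
  qed
  have "pauli_string n p * Pj NN S g r = Pj NN S (\<lambda>i. esg p i * g i) r * pauli_string n p"
    using esg[OF l] by (intro Pj_pass) auto
  also have "Pj NN S (\<lambda>i. esg p i * g i) r = Pj NN S (fx x) r"
    using esg_sq[OF l] by (intro Pj_cong) (simp add: g_def mult.assoc[symmetric])
  finally have pass: "Pj NN S (fx x) r * pauli_string n p = pauli_string n p * Pj NN S g r" ..
  have "Pj NN S (fx x) r * pauli_string n p * P0 = pauli_string n p * (Pj NN S g r * P0)"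
    unfolding pass by (simp add: asc)
  also have "Pj NN S g r * P0 = (if \<forall>i<r. g i = 1 then Pj NN S g r else 0\<^sub>m NN NN)"
    using gs by (intro Pj_mult) auto
  finally have eq: "Pj NN S (fx x) r * pauli_string n p * P0 =
     pauli_string n p * (if \<forall>i<r. g i = 1 then Pj NN S g r else 0\<^sub>m NN NN)" .
  show ?thesis
  proof (cases "\<forall>i<r. g i = 1")
    case False
    then have "Pj NN S (fx x) r * pauli_string n p * P0 = 0 \<cdot>\<^sub>m (Ex x * P0)"
      unfolding eq by (intro eq_matI) auto
    then show ?thesis by blast
  next
    case True
    then have "Pj NN S g r = P0" by (intro Pj_cong) auto
    with True eq have eq2: "Pj NN S (fx x) r * pauli_string n p * P0 = pauli_string n p * P0" by simp
    have "\<forall>i<r. esg p i = fx x i"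
    proof (intro allI impI)
      fix i assume i: "i < r"
      have "esg p i * (esg p i * fx x i) = esg p i" using True i unfolding g_def by simp
      then show "esg p i = fx x i" using esg_sq[OF l i] by (simp add: mult.assoc[symmetric])
    qed
    then have "good x p" using p unfolding good_def by simp
    then obtain p0 where g0: "good x p0" and E: "Ex x = pauli_string n p0" using Ex_good by blast
    have p0: "p0 \<in> Pset" and l0: "\<forall>k<n. p0 k < 4" using g0 Pset_lt4 unfolding good_def by auto
    obtain c T where T: "T \<in> stab_group n r S" and Q: "pauli_string n p0 * pauli_string n p = c \<cdot>\<^sub>m T"
      using recov_Q[OF p0 p] g0 \<open>\<forall>i<r. esg p i = fx x i\<close> unfolding good_def by auto
    have Tc: "T \<in> carrier_mat NN NN" using stab_carrier[OF T] .
    have "pauli_string n p = pauli_string n p0 * (pauli_string n p0 * pauli_string n p)"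
      using ps_sq[OF l0] by (simp add: asc[symmetric])
    then have "pauli_string n p * P0 = pauli_string n p0 * ((c \<cdot>\<^sub>m T) * P0)"
      unfolding Q using Tc by (simp add: asc)
    also have "(c \<cdot>\<^sub>m T) * P0 = c \<cdot>\<^sub>m P0"
      using Tc stab_P0[OF T] by (simp add: mult_smult_assoc_mat[of _ NN NN _ NN])
    also have "pauli_string n p0 * (c \<cdot>\<^sub>m P0) = c \<cdot>\<^sub>m (Ex x * P0)"
      unfolding E by (simp add: mult_smult_distrib[of _ NN NN _ NN])
    finally have "pauli_string n p * P0 = c \<cdot>\<^sub>m (Ex x * P0)" .
    with eq2 show ?thesis by (intro exI[of _ c]) simp
  qed
qed

lemma right_lem:
  assumes q: "q \<in> Pset"
  shows "\<exists>\<mu>. P0 * pauli_string n q * Pj NN S (fx x) r = \<mu> \<cdot>\<^sub>m (P0 * Ex x)"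
proof -
  have l: "\<forall>k<n. q k < 4" using q Pset_lt4 by auto
  define g where "g i = esg q i * fx x i" for i
  have gs: "\<forall>i<r. g i \<in> {1,-1}"
  proof (intro allI impI)
    fix i assume i: "i < r"
    show "g i \<in> {1,-1}" unfolding g_def using esg[OF l i] fx_sign[of x i] by (intro sign_prod) auto
  qed
  have pass: "pauli_string n q * Pj NN S (fx x) r = Pj NN S g r * pauli_string n q"
    unfolding g_def using esg[OF l] by (intro Pj_pass) auto
  have "P0 * pauli_string n q * Pj NN S (fx x) r = (P0 * Pj NN S g r) * pauli_string n q"
    by (simp add: asc pass)
  also have "P0 * Pj NN S g r = (if \<forall>i<r. (1::complex) = g i then P0 else 0\<^sub>m NN NN)"
    using gs by (intro Pj_mult) auto
  finally have eq: "P0 * pauli_string n q * Pj NN S (fx x) r =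
     (if \<forall>i<r. (1::complex) = g i then P0 else 0\<^sub>m NN NN) * pauli_string n q" .
  show ?thesis
  proof (cases "\<forall>i<r. (1::complex) = g i")
    case False
    then have "P0 * pauli_string n q * Pj NN S (fx x) r = 0 \<cdot>\<^sub>m (P0 * Ex x)"
      unfolding eq by (intro eq_matI) auto
    then show ?thesis by blast
  next
    case True
    with eq have eq2: "P0 * pauli_string n q * Pj NN S (fx x) r = P0 * pauli_string n q" by simp
    have "\<forall>i<r. esg q i = fx x i"
    proof (intro allI impI)
      fix i assume i: "i < r"
      have "esg q i * (esg q i * fx x i) = esg q i" using True i unfolding g_def by simp
      then show "esg q i = fx x i" using esg_sq[OF l i] by (simp add: mult.assoc[symmetric])
    qed
    then have "good x q" using q unfolding good_def by simp
    then obtain p0 where g0: "good x p0" and E: "Ex x = pauli_string n p0" using Ex_good by blast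
    have p0: "p0 \<in> Pset" and l0: "\<forall>k<n. p0 k < 4" using g0 Pset_lt4 unfolding good_def by auto
    obtain c T where T: "T \<in> stab_group n r S" and Q: "pauli_string n q * pauli_string n p0 = c \<cdot>\<^sub>m T"
      using recov_Q[OF q p0] g0 \<open>\<forall>i<r. esg q i = fx x i\<close> unfolding good_def by auto
    have Tc: "T \<in> carrier_mat NN NN" using stab_carrier[OF T] .
    have "pauli_string n q = (pauli_string n q * pauli_string n p0) * pauli_string n p0"
      using ps_sq[OF l0] by (simp add: asc)
    then have "P0 * pauli_string n q = (P0 * (c \<cdot>\<^sub>m T)) * pauli_string n p0"
      unfolding Q using Tc by (simp add: asc)
    also have "P0 * (c \<cdot>\<^sub>m T) = c \<cdot>\<^sub>m P0"
      using Tc stab_P0[OF T] by (simp add: mult_smult_distrib[of _ NN NN _ NN])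
    also have "(c \<cdot>\<^sub>m P0) * pauli_string n p0 = c \<cdot>\<^sub>m (P0 * Ex x)"
      unfolding E by (simp add: mult_smult_assoc_mat[of _ NN NN _ NN])
    finally have "P0 * pauli_string n q = c \<cdot>\<^sub>m (P0 * Ex x)" .
    with eq2 show ?thesis by (intro exI[of _ c]) simp
  qed
qed

lemma sandwich:
  assumes rho: "\<rho> \<in> carrier_mat NN NN" and r0: "P0 * \<rho> * P0 = \<rho>"
    and p: "p \<in> Pset" and q: "q \<in> Pset"
  shows "\<exists>\<mu>. Pj NN S (fx x) r * (pauli_string n p * \<rho> * pauli_string n q) * Pj NN S (fx x) r
      = \<mu> \<cdot>\<^sub>m (Ex x * \<rho> * Ex x)"
proof -
  obtain a where a: "Pj NN S (fx x) r * pauli_string n p * P0 = a \<cdot>\<^sub>m (Ex x * P0)"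
    using left_lem[OF p] by blast
  obtain b where b: "P0 * pauli_string n q * Pj NN S (fx x) r = b \<cdot>\<^sub>m (P0 * Ex x)"
    using right_lem[OF q] by blast
  have "Pj NN S (fx x) r * (pauli_string n p * \<rho> * pauli_string n q) * Pj NN S (fx x) r
     = Pj NN S (fx x) r * (pauli_string n p * (P0 * \<rho> * P0) * pauli_string n q) * Pj NN S (fx x) r"
    using r0 by simp
  also have "\<dots> = (Pj NN S (fx x) r * pauli_string n p * P0) * \<rho> * (P0 * pauli_string n q * Pj NN S (fx x) r)"
    using rho by (simp add: asc)
  also have "\<dots> = (a \<cdot>\<^sub>m (Ex x * P0)) * \<rho> * (b \<cdot>\<^sub>m (P0 * Ex x))" unfolding a b ..
  also have "\<dots> = (a * b) \<cdot>\<^sub>m ((Ex x * P0) * \<rho> * (P0 * Ex x))"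
    using rho by (simp add: mult_smult_assoc_mat[of _ NN NN _ NN] mult_smult_distrib[of _ NN NN _ NN] smult_smult_mat mult.commute)
  also have "(Ex x * P0) * \<rho> * (P0 * Ex x) = Ex x * (P0 * \<rho> * P0) * Ex x"
    using rho by (simp add: asc)
  finally have "Pj NN S (fx x) r * (pauli_string n p * \<rho> * pauli_string n q) * Pj NN S (fx x) r
      = (a * b) \<cdot>\<^sub>m (Ex x * (P0 * \<rho> * P0) * Ex x)" .
  then show ?thesis unfolding r0 by (intro exI[of _ "a*b"])
qed

end

definition w1 :: "nat \<Rightarrow> nat \<Rightarrow> nat \<Rightarrow> complex" where
  "w1 a b q = (if a = b then (if q = 0 then 1/2 else if q = 3 then (if a = 0 then 1/2 else -1/2) else 0)
     else (if q = 1 then 1/2 else if q = 2 then (if a = 0 then \<i>/2 else -\<i>/2) else 0))"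

lemma set04: "{0..<4::nat} = {0,1,2,3}" by auto

lemma w1_sum:
  assumes "a < 2" "b < 2" "u < 2" "v < 2"
  shows "(\<Sum>q\<in>{0..<4}. w1 a b q * pe q u v) = of_bool (u = a \<and> v = b)"
proof -
  have "a = 0 \<or> a = 1" "b = 0 \<or> b = 1" "u = 0 \<or> u = 1" "v = 0 \<or> v = 1" using assms by auto
  then show ?thesis unfolding set04
    by (elim disjE) (simp_all add: w1_def pe_def field_simps)
qed

lemma pe0: "pe 0 u v = of_bool (u = v)" by (simp add: pe_def)

lemma prod_of_bool: "finite A \<Longrightarrow> (\<Prod>k\<in>A. of_bool (P k) :: complex) = of_bool (\<forall>k\<in>A. P k)"
  by (induction A rule: finite_induct) auto

context setting begin

definition BB where "BB = B \<inter> {0..<n}"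
definition FS :: "(nat \<Rightarrow> nat) set" where "FS = PiE BB (\<lambda>_. {0..<2})"
definition PIE :: "(nat \<Rightarrow> nat) set" where "PIE = PiE {..<n} (\<lambda>k. if k \<in> B then {0..<4} else {0})"
definition bits :: "nat \<Rightarrow> nat \<Rightarrow> nat" where "bits i = restrict (\<lambda>k. qbit i k) BB"
definition rv :: "(nat \<Rightarrow> nat) \<Rightarrow> nat" where "rv f = (\<Sum>k\<in>BB. f k * 2^k)"
definition W :: "(nat \<Rightarrow> nat) \<Rightarrow> (nat \<Rightarrow> nat) \<Rightarrow> (nat \<Rightarrow> nat) \<Rightarrow> complex" where
  "W f f' p = (\<Prod>k<n. if k \<in> B then w1 (f k) (f' k) (p k) else 1)"
definition K :: "(nat \<Rightarrow> nat) \<Rightarrow> (nat \<Rightarrow> nat) \<Rightarrow> complex mat" where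
  "K f f' = msum NN PIE (\<lambda>p. W f f' p \<cdot>\<^sub>m pauli_string n p)"

lemma finite_BB: "finite BB" by (simp add: BB_def)
lemma finite_FS: "finite FS" unfolding FS_def by (intro finite_PiE finite_BB) auto
lemma finite_PIE: "finite PIE" unfolding PIE_def by (intro finite_PiE) auto

lemma PIE_Pset: "p \<in> PIE \<Longrightarrow> p \<in> Pset"
  unfolding PIE_def Pset_def by (auto simp: PiE_iff split: if_splits)

lemma bits_FS: "bits i \<in> FS"
  unfolding bits_def FS_def using qbit_lt2 by auto

lemma rv_bits: "rv (bits i) = restrict_idx B n i"
  unfolding rv_def bits_def restrict_idx_def BB_def by (intro sum.cong) auto

lemma FS_eq_bits: "f \<in> FS \<Longrightarrow> (f = bits i \<longleftrightarrow> (\<forall>k\<in>BB. f k = qbit i k))"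
  unfolding FS_def bits_def by (auto simp: PiE_iff extensional_def restrict_def fun_eq_iff)

lemma K_carrier[simp]: "K f f' \<in> carrier_mat NN NN" by (simp add: K_def)

lemma K_index:
  assumes f: "f \<in> FS" and f': "f' \<in> FS" and i: "i < NN" and a: "a < NN"
  shows "K f f' $$ (i,a) = of_bool (agree_outside B n i a \<and> f = bits i \<and> f' = bits a)"
proof -
  define h where "h k q = (if k \<in> B then w1 (f k) (f' k) q else 1) * pe q (qbit i k) (qbit a k)" for k q
  have "K f f' $$ (i,a) = (\<Sum>p\<in>PIE. W f f' p * pauli_string n p $$ (i,a))"
    unfolding K_def using i a by (simp add: msum_index)
  also have "\<dots> = (\<Sum>p\<in>PIE. \<Prod>k<n. h k (p k))"
    using i a by (intro sum.cong refl) (simp add: W_def ps_index h_def prod.distrib)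
  also have "\<dots> = (\<Prod>k<n. \<Sum>q\<in>(if k \<in> B then {0..<4} else {0}). h k q)"
    unfolding PIE_def by (rule prod_sum_PiE[symmetric]) auto
  also have "\<dots> = (\<Prod>k<n. of_bool (if k \<in> B then qbit i k = f k \<and> qbit a k = f' k else qbit i k = qbit a k))"
  proof (rule prod.cong[OF refl])
    fix k assume k: "k \<in> {..<n}"
    show "(\<Sum>q\<in>(if k \<in> B then {0..<4} else {0}). h k q) =
      of_bool (if k \<in> B then qbit i k = f k \<and> qbit a k = f' k else qbit i k = qbit a k)"
    proof (cases "k \<in> B")
      case True
      then have "k \<in> BB" using k by (simp add: BB_def)
      then have "f k < 2" "f' k < 2" using f f' by (auto simp: FS_def PiE_iff)
      then show ?thesis using True unfolding h_def by (simp add: w1_sum)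
    next
      case False
      then show ?thesis unfolding h_def by (simp add: pe0)
    qed
  qed
  also have "\<dots> = of_bool (\<forall>k\<in>{..<n}. if k \<in> B then qbit i k = f k \<and> qbit a k = f' k else qbit i k = qbit a k)"
    by (rule prod_of_bool) simp
  also have "(\<forall>k\<in>{..<n}. if k \<in> B then qbit i k = f k \<and> qbit a k = f' k else qbit i k = qbit a k)
     \<longleftrightarrow> agree_outside B n i a \<and> f = bits i \<and> f' = bits a"
    unfolding FS_eq_bits[OF f] FS_eq_bits[OF f'] agree_outside_def BB_def by auto
  finally show ?thesis .
qed

end

lemma triple_index:
  assumes A: "A \<in> carrier_mat N N" and R: "R \<in> carrier_mat N N" and C: "C \<in> carrier_mat N N"
    and i: "i < N" and j: "j < N"
  shows "(A * R * C) $$ (i,j) = (\<Sum>a<N. \<Sum>b<N. A $$ (i,a) * R $$ (a,b) * C $$ (b,j))"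
proof -
  have "(A * R * C) $$ (i,j) = (\<Sum>b<N. (A * R) $$ (i,b) * C $$ (b,j))"
    using A R C i j by (intro mult_index_N) auto
  also have "\<dots> = (\<Sum>b<N. \<Sum>a<N. A $$ (i,a) * R $$ (a,b) * C $$ (b,j))"
  proof (rule sum.cong[OF refl])
    fix b assume "b \<in> {..<N}"
    then have "(A * R) $$ (i,b) = (\<Sum>a<N. A $$ (i,a) * R $$ (a,b))"
      using mult_index_N[OF A R i] by simp
    then show "(A * R) $$ (i,b) * C $$ (b,j) = (\<Sum>a<N. A $$ (i,a) * R $$ (a,b) * C $$ (b,j))"
      by (simp add: sum_distrib_right)
  qed
  also have "\<dots> = (\<Sum>a<N. \<Sum>b<N. A $$ (i,a) * R $$ (a,b) * C $$ (b,j))"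
    by (rule sum.swap)
  finally show ?thesis .
qed

lemma smult_index_N: "M \<in> carrier_mat N N \<Longrightarrow> i < N \<Longrightarrow> j < N \<Longrightarrow> (c \<cdot>\<^sub>m M) $$ (i,j) = c * M $$ (i,j)"
  by auto

lemma agree_sym: "agree_outside B n i j = agree_outside B n j i"
  unfolding agree_outside_def by auto

context setting begin

definition F4 where "F4 = FS \<times> FS \<times> FS \<times> FS"

lemma finite_F4: "finite F4" unfolding F4_def using finite_FS by simp

definition Eterm :: "(nat \<Rightarrow> nat \<Rightarrow> nat \<Rightarrow> nat \<Rightarrow> complex) \<Rightarrow> complex mat \<Rightarrow>
   (nat \<Rightarrow> nat) \<times> (nat \<Rightarrow> nat) \<times> (nat \<Rightarrow> nat) \<times> (nat \<Rightarrow> nat) \<Rightarrow> complex mat" where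
  "Eterm T \<rho> t = (case t of (f, f', g, g') \<Rightarrow> T (rv f) (rv g) (rv f') (rv g') \<cdot>\<^sub>m (K f f' * \<rho> * K g' g))"

lemma Eterm_carrier: "\<rho> \<in> carrier_mat NN NN \<Longrightarrow> Eterm T \<rho> t \<in> carrier_mat NN NN"
  unfolding Eterm_def by (cases t) auto

lemma inner_collapse:
  assumes rho: "\<rho> \<in> carrier_mat NN NN" and i: "i < NN" and j: "j < NN" and a: "a < NN" and b: "b < NN"
  shows "(\<Sum>t\<in>F4. case t of (f, f', g, g') \<Rightarrow>
      T (rv f) (rv g) (rv f') (rv g') * (K f f' $$ (i,a) * \<rho> $$ (a,b) * K g' g $$ (b,j)))
    = of_bool (agree_outside B n i a \<and> agree_outside B n j b) *
      (T (restrict_idx B n i) (restrict_idx B n j) (restrict_idx B n a) (restrict_idx B n b) * \<rho> $$ (a,b))"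
proof -
  let ?t0 = "(bits i, bits a, bits j, bits b)"
  let ?v = "of_bool (agree_outside B n i a \<and> agree_outside B n j b) *
      (T (restrict_idx B n i) (restrict_idx B n j) (restrict_idx B n a) (restrict_idx B n b) * \<rho> $$ (a,b))"
  have "(\<Sum>t\<in>F4. case t of (f, f', g, g') \<Rightarrow>
      T (rv f) (rv g) (rv f') (rv g') * (K f f' $$ (i,a) * \<rho> $$ (a,b) * K g' g $$ (b,j)))
    = (\<Sum>t\<in>F4. if t = ?t0 then ?v else 0)"
  proof (rule sum.cong[OF refl])
    fix t assume t: "t \<in> F4"
    obtain f f' g g' where tt: "t = (f, f', g, g')" by (cases t) auto
    have fs: "f \<in> FS" "f' \<in> FS" "g \<in> FS" "g' \<in> FS" using t unfolding tt F4_def by auto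
    show "(case t of (f, f', g, g') \<Rightarrow>
      T (rv f) (rv g) (rv f') (rv g') * (K f f' $$ (i,a) * \<rho> $$ (a,b) * K g' g $$ (b,j)))
      = (if t = ?t0 then ?v else 0)"
      unfolding tt using fs i j a b
      by (auto simp: K_index rv_bits agree_sym[of B n j b])
  qed
  also have "\<dots> = ?v"
    using finite_F4 bits_FS by (simp add: F4_def)
  finally show ?thesis .
qed

lemma E_rep:
  assumes hT: "\<forall>\<rho> \<in> carrier_mat (2 ^ n) (2 ^ n). E \<rho> = mat (2 ^ n) (2 ^ n) (\<lambda>(i, j).
       \<Sum>(i', j') \<in> {(i', j'). i' < 2 ^ n \<and> j' < 2 ^ n \<and> agree_outside B n i i' \<and> agree_outside B n j j'}.
         T (restrict_idx B n i) (restrict_idx B n j) (restrict_idx B n i') (restrict_idx B n j') * \<rho> $$ (i', j'))"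
    and rho: "\<rho> \<in> carrier_mat NN NN"
  shows "E \<rho> = msum NN F4 (Eterm T \<rho>)"
proof (rule eq_matI)
  fix i j assume "i < dim_row (msum NN F4 (Eterm T \<rho>))" "j < dim_col (msum NN F4 (Eterm T \<rho>))"
  hence i: "i < NN" and j: "j < NN" by auto
  let ?g = "\<lambda>a b. T (restrict_idx B n i) (restrict_idx B n j) (restrict_idx B n a) (restrict_idx B n b) * \<rho> $$ (a,b)"
  let ?P = "\<lambda>(a,b). agree_outside B n i a \<and> agree_outside B n j b"
  have "E \<rho> $$ (i,j) = (\<Sum>(a,b)\<in>{(a, b). a < NN \<and> b < NN \<and> agree_outside B n i a \<and> agree_outside B n j b}. ?g a b)"
    using hT rho i j by simp
  also have "{(a, b). a < NN \<and> b < NN \<and> agree_outside B n i a \<and> agree_outside B n j b} = {x \<in> {..<NN} \<times> {..<NN}. ?P x}"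
    by auto
  also have "(\<Sum>(a,b)\<in>{x \<in> {..<NN} \<times> {..<NN}. ?P x}. ?g a b) =
      (\<Sum>x\<in>{..<NN} \<times> {..<NN}. if ?P x then (case x of (a,b) \<Rightarrow> ?g a b) else 0)"
    by (rule sum.inter_filter) simp
  also have "\<dots> = (\<Sum>a<NN. \<Sum>b<NN. of_bool (agree_outside B n i a \<and> agree_outside B n j b) * ?g a b)"
    unfolding sum.cartesian_product by (intro sum.cong refl) auto
  also have "\<dots> = (\<Sum>a<NN. \<Sum>b<NN. \<Sum>t\<in>F4. case t of (f, f', g, g') \<Rightarrow>
      T (rv f) (rv g) (rv f') (rv g') * (K f f' $$ (i,a) * \<rho> $$ (a,b) * K g' g $$ (b,j)))"
    using rho i j by (intro sum.cong refl) (simp add: inner_collapse)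
  also have "\<dots> = (\<Sum>a<NN. \<Sum>t\<in>F4. \<Sum>b<NN. case t of (f, f', g, g') \<Rightarrow>
      T (rv f) (rv g) (rv f') (rv g') * (K f f' $$ (i,a) * \<rho> $$ (a,b) * K g' g $$ (b,j)))"
    by (intro sum.cong refl) (rule sum.swap)
  also have "\<dots> = (\<Sum>t\<in>F4. \<Sum>a<NN. \<Sum>b<NN. case t of (f, f', g, g') \<Rightarrow>
      T (rv f) (rv g) (rv f') (rv g') * (K f f' $$ (i,a) * \<rho> $$ (a,b) * K g' g $$ (b,j)))"
    by (rule sum.swap)
  also have "\<dots> = (\<Sum>t\<in>F4. Eterm T \<rho> t $$ (i,j))"
  proof (rule sum.cong[OF refl])
    fix t assume t: "t \<in> F4"
    obtain f f' g g' where tt: "t = (f, f', g, g')" by (cases t) auto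
    show "(\<Sum>a<NN. \<Sum>b<NN. case t of (f, f', g, g') \<Rightarrow>
      T (rv f) (rv g) (rv f') (rv g') * (K f f' $$ (i,a) * \<rho> $$ (a,b) * K g' g $$ (b,j))) = Eterm T \<rho> t $$ (i,j)"
    proof -
      have Mc: "K f f' * \<rho> * K g' g \<in> carrier_mat NN NN" using rho by simp
      have "Eterm T \<rho> t $$ (i,j) = T (rv f) (rv g) (rv f') (rv g') * (K f f' * \<rho> * K g' g) $$ (i,j)"
        unfolding tt Eterm_def using smult_index_N[OF Mc i j] by simp
      also have "\<dots> = T (rv f) (rv g) (rv f') (rv g') * (\<Sum>a<NN. \<Sum>b<NN. K f f' $$ (i,a) * \<rho> $$ (a,b) * K g' g $$ (b,j))"
        using triple_index[OF K_carrier rho K_carrier i j] by simp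
      finally show ?thesis unfolding tt by (simp add: sum_distrib_left)
    qed
  qed
  also have "\<dots> = msum NN F4 (Eterm T \<rho>) $$ (i,j)"
    using i j by (simp add: msum_index)
  finally show "E \<rho> $$ (i,j) = msum NN F4 (Eterm T \<rho>) $$ (i,j)" .
next
  show "dim_row (E \<rho>) = dim_row (msum NN F4 (Eterm T \<rho>))" using hT rho by simp
  show "dim_col (E \<rho>) = dim_col (msum NN F4 (Eterm T \<rho>))" using hT rho by simp
qed

end

context setting begin

definition Gd :: "nat \<Rightarrow> complex mat \<Rightarrow> complex mat \<Rightarrow> bool" where
  "Gd x \<rho> M \<longleftrightarrow> M \<in> carrier_mat NN NN \<and>
     (\<exists>c. Pj NN S (fx x) r * M * Pj NN S (fx x) r = c \<cdot>\<^sub>m (Ex x * \<rho> * Ex x))"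

lemma Gd_smult:
  assumes "Gd x \<rho> M" and rho: "\<rho> \<in> carrier_mat NN NN"
  shows "Gd x \<rho> (a \<cdot>\<^sub>m M)"
proof -
  obtain c where M: "M \<in> carrier_mat NN NN" and c: "Pj NN S (fx x) r * M * Pj NN S (fx x) r = c \<cdot>\<^sub>m (Ex x * \<rho> * Ex x)"
    using assms unfolding Gd_def by blast
  have "Pj NN S (fx x) r * (a \<cdot>\<^sub>m M) * Pj NN S (fx x) r = a \<cdot>\<^sub>m (Pj NN S (fx x) r * M * Pj NN S (fx x) r)"
    using M by (simp add: mult_smult_distrib[of _ NN NN _ NN] mult_smult_assoc_mat[of _ NN NN _ NN])
  also have "\<dots> = (a * c) \<cdot>\<^sub>m (Ex x * \<rho> * Ex x)" unfolding c by (simp add: smult_smult_mat)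
  finally show ?thesis using M unfolding Gd_def by auto
qed

lemma Gd_msum:
  assumes h: "\<forall>t\<in>F. Gd x \<rho> (h t)"
  shows "Gd x \<rho> (msum NN F h)"
proof -
  let ?P = "Pj NN S (fx x) r"
  define c where "c t = (SOME c. ?P * h t * ?P = c \<cdot>\<^sub>m (Ex x * \<rho> * Ex x))" for t
  have hc: "\<forall>t\<in>F. h t \<in> carrier_mat NN NN" using h unfolding Gd_def by blast
  have c: "\<forall>t\<in>F. ?P * h t * ?P = c t \<cdot>\<^sub>m (Ex x * \<rho> * Ex x)"
  proof
    fix t assume "t \<in> F"
    then have "\<exists>c. ?P * h t * ?P = c \<cdot>\<^sub>m (Ex x * \<rho> * Ex x)" using h unfolding Gd_def by blast
    then show "?P * h t * ?P = c t \<cdot>\<^sub>m (Ex x * \<rho> * Ex x)" unfolding c_def by (rule someI_ex)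
  qed
  have "?P * msum NN F h * ?P = msum NN F (\<lambda>t. ?P * h t) * ?P"
    using hc by (simp add: msum_mult_left)
  also have "\<dots> = msum NN F (\<lambda>t. ?P * h t * ?P)"
    using hc by (simp add: msum_mult_right)
  also have "\<dots> = (\<Sum>t\<in>F. c t) \<cdot>\<^sub>m (Ex x * \<rho> * Ex x)"
    using c by (rule msum_const) (use Gd_def h in auto)
  finally show ?thesis unfolding Gd_def by auto
qed

lemma Gd_msum_carrier: "Ex x * \<rho> * Ex x \<in> carrier_mat NN NN \<or> True" by simp

lemma Gd_pp:
  assumes rho: "\<rho> \<in> carrier_mat NN NN" and r0: "P0 * \<rho> * P0 = \<rho>"
    and p: "p \<in> Pset" and q: "q \<in> Pset"
  shows "Gd x \<rho> (pauli_string n p * \<rho> * pauli_string n q)"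
  unfolding Gd_def using sandwich[OF rho r0 p q] rho by simp

lemma Gd_K:
  assumes rho: "\<rho> \<in> carrier_mat NN NN" and r0: "P0 * \<rho> * P0 = \<rho>"
  shows "Gd x \<rho> (K f f' * \<rho> * K g' g)"
proof -
  have inner: "Gd x \<rho> (pauli_string n p * \<rho> * K g' g)" if p: "p \<in> PIE" for p
  proof -
    have "pauli_string n p * \<rho> * K g' g = msum NN PIE (\<lambda>q. pauli_string n p * \<rho> * (W g' g q \<cdot>\<^sub>m pauli_string n q))"
      unfolding K_def using rho by (subst msum_mult_left) auto
    also have "\<dots> = msum NN PIE (\<lambda>q. W g' g q \<cdot>\<^sub>m (pauli_string n p * \<rho> * pauli_string n q))"
      using rho by (intro msum_cong) (simp add: mult_smult_distrib[of _ NN NN _ NN])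
    finally show ?thesis
      using p rho r0 by (simp add: Gd_msum Gd_smult Gd_pp PIE_Pset)
  qed
  have "K f f' * \<rho> * K g' g = msum NN PIE (\<lambda>p. (W f f' p \<cdot>\<^sub>m pauli_string n p) * \<rho>) * K g' g"
    unfolding K_def[of f f'] using rho by (subst msum_mult_right) auto
  also have "\<dots> = msum NN PIE (\<lambda>p. (W f f' p \<cdot>\<^sub>m pauli_string n p) * \<rho> * K g' g)"
    using rho by (subst msum_mult_right) auto
  also have "\<dots> = msum NN PIE (\<lambda>p. W f f' p \<cdot>\<^sub>m (pauli_string n p * \<rho> * K g' g))"
    using rho by (intro msum_cong) (simp add: mult_smult_assoc_mat[of _ NN NN _ NN])
  finally show ?thesis
    using inner rho by (simp add: Gd_msum Gd_smult)
qed

lemma Gd_Erep: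
  assumes rho: "\<rho> \<in> carrier_mat NN NN" and r0: "P0 * \<rho> * P0 = \<rho>"
  shows "Gd x \<rho> (msum NN F4 (Eterm T \<rho>))"
proof (rule Gd_msum, rule ballI)
  fix t assume "t \<in> F4"
  obtain f f' g g' where tt: "t = (f, f', g, g')" by (cases t) auto
  show "Gd x \<rho> (Eterm T \<rho> t)"
    unfolding tt Eterm_def using Gd_K[OF rho r0] rho by (simp add: Gd_smult)
qed

end

theorem lemma2p24:
  fixes n r :: nat and S :: "nat \<Rightarrow> complex mat" and B :: "nat set"
    and E :: "complex mat \<Rightarrow> complex mat" and \<rho> :: "complex mat"
  assumes "stabilizer_generators n r S"
    and "recoverable n r S B"
    and "identity_outside n B E"
    and "density_op n \<rho>"
    and "proj n r S 0 * \<rho> * proj n r S 0 = \<rho>"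
  shows "\<exists>\<alpha> :: nat \<Rightarrow> complex. \<exists>Ex :: nat \<Rightarrow> complex mat.
           (\<forall>x < 2 ^ r. pauli_on n B (Ex x)) \<and>
           syndrome_meas n r S (E \<rho>) = blockdiag r (2 ^ n) (\<lambda>x. \<alpha> x \<cdot>\<^sub>m (Ex x * \<rho> * Ex x)) \<and>
           (trace_preserving n E \<longrightarrow> (\<Sum>x < 2 ^ r. \<alpha> x) = 1)"
proof -
  interpret setting n r S B using assms(1,2) by unfold_locales
  obtain T where hT: "\<forall>\<rho> \<in> carrier_mat (2 ^ n) (2 ^ n). E \<rho> = mat (2 ^ n) (2 ^ n) (\<lambda>(i, j).
       \<Sum>(i', j') \<in> {(i', j'). i' < 2 ^ n \<and> j' < 2 ^ n \<and> agree_outside B n i i' \<and> agree_outside B n j j'}.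
         T (restrict_idx B n i) (restrict_idx B n j) (restrict_idx B n i') (restrict_idx B n j') * \<rho> $$ (i', j'))"
    using assms(3) unfolding identity_outside_def by blast
  have rho: "\<rho> \<in> carrier_mat NN NN" using assms(4) unfolding density_op_def by blast
  have tr1: "mtrace \<rho> = 1" using assms(4) unfolding density_op_def by blast
  have r0: "P0 * \<rho> * P0 = \<rho>" using assms(5) proj0 by simp
  have Eeq: "E \<rho> = msum NN F4 (Eterm T \<rho>)" by (rule E_rep[OF hT rho])
  have Ec: "E \<rho> \<in> carrier_mat NN NN" unfolding Eeq by simp
  have G: "Gd x \<rho> (E \<rho>)" for x unfolding Eeq by (rule Gd_Erep[OF rho r0])
  define \<alpha> where "\<alpha> x = (SOME c. Pj NN S (fx x) r * E \<rho> * Pj NN S (fx x) r = c \<cdot>\<^sub>m (Ex x * \<rho> * Ex x))" for x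
  have \<alpha>p: "Pj NN S (fx x) r * E \<rho> * Pj NN S (fx x) r = \<alpha> x \<cdot>\<^sub>m (Ex x * \<rho> * Ex x)" for x
  proof -
    have "\<exists>c. Pj NN S (fx x) r * E \<rho> * Pj NN S (fx x) r = c \<cdot>\<^sub>m (Ex x * \<rho> * Ex x)"
      using G[of x] unfolding Gd_def by blast
    then show ?thesis unfolding \<alpha>_def by (rule someI_ex)
  qed
  have \<alpha>p': "proj n r S x * E \<rho> * proj n r S x = \<alpha> x \<cdot>\<^sub>m (Ex x * \<rho> * Ex x)" for x
    unfolding proj_eq by (rule \<alpha>p)
  show ?thesis
  proof (intro exI[of _ \<alpha>] exI[of _ Ex] conjI)
    show "\<forall>x<2 ^ r. pauli_on n B (Ex x)" using Ex_pauli by blast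
    show "syndrome_meas n r S (E \<rho>) = blockdiag r (2 ^ n) (\<lambda>x. \<alpha> x \<cdot>\<^sub>m (Ex x * \<rho> * Ex x))"
      unfolding syndrome_meas_def \<alpha>p' ..
    show "trace_preserving n E \<longrightarrow> (\<Sum>x<2 ^ r. \<alpha> x) = 1"
    proof
      assume tp: "trace_preserving n E"
      have trE: "mtrace (E \<rho>) = 1" using tp rho tr1 unfolding trace_preserving_def by simp
      have ax: "\<alpha> x = mtrace (E \<rho> * Pj NN S (fx x) r)" for x
      proof -
        let ?P = "Pj NN S (fx x) r"
        have Pc: "?P \<in> carrier_mat NN NN" by simp
        have PP: "?P * ?P = ?P" using Pj_mult[of r "fx x" "fx x"] fx_sign by simp
        have "mtrace (Ex x * \<rho> * Ex x) = mtrace (Ex x * (Ex x * \<rho>))"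
          using rho by (intro mtrace_comm[of _ NN]) auto
        also have "Ex x * (Ex x * \<rho>) = \<rho>"
          using rho Ex_sq[of x] by (simp add: asc[symmetric])
        finally have t1: "mtrace (Ex x * \<rho> * Ex x) = 1" using tr1 by simp
        have "\<alpha> x = mtrace (\<alpha> x \<cdot>\<^sub>m (Ex x * \<rho> * Ex x))"
          using rho t1 by (subst mtrace_smult[of _ NN]) auto
        also have "\<dots> = mtrace (?P * (E \<rho> * ?P))" unfolding \<alpha>p[symmetric] using Ec by (simp add: asc)
        also have "\<dots> = mtrace ((E \<rho> * ?P) * ?P)" using Ec by (intro mtrace_comm[of _ NN]) auto
        also have "\<dots> = mtrace (E \<rho> * ?P)" using Ec PP by (simp add: asc)
        finally show ?thesis .
      qed
      have fxe: "(\<lambda>x. Pj NN S (\<lambda>i. (-1)^qbit x i) r) = (\<lambda>x. Pj NN S (fx x) r)"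
        by (simp add: fx_def[abs_def])
      have "(\<Sum>x<2 ^ r. \<alpha> x) = (\<Sum>x<2 ^ r. mtrace (E \<rho> * Pj NN S (fx x) r))" using ax by simp
      also have "\<dots> = mtrace (msum NN {..<2^r} (\<lambda>x. E \<rho> * Pj NN S (fx x) r))"
        using Ec by (subst mtrace_msum) auto
      also have "msum NN {..<2^r} (\<lambda>x. E \<rho> * Pj NN S (fx x) r) = E \<rho> * msum NN {..<2^r} (\<lambda>x. Pj NN S (fx x) r)"
        using Ec by (subst msum_mult_left) auto
      also have "msum NN {..<2^r} (\<lambda>x. Pj NN S (fx x) r) = 1\<^sub>m NN"
        using Psum[of r] fxe by simp
      finally show "(\<Sum>x<2 ^ r. \<alpha> x) = 1" using Ec trE by simp
    qed
  qed
qed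

end
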